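(* Let $\Delta=(\mathcal{D},\delta)$ be a program over a clocked basic action theory $\mathcal{D}$, let $K\in\mathbb{N}$ be at least as large as every natural-number constant mentioned in $\mathcal{D}$, and let $\mathcal{T}_\Delta$ be the transition system returned by Algorithm 2 (described in the context) on input $(\mathcal{D},\delta,K)$. Then $\mathcal{T}_\Delta$ contains a state $([\sigma']_{\approx_{\mathcal{D}K}},\delta')$ reachable from $([S_0]_{\approx_{\mathcal{D}K}},\delta)$ with $\mathcal{D}\models\mathrm{Final}(\delta',\sigma')$ if and only if there is a realization of $\Delta$.
   Context: Situation calculus setting: sorts action, situation, object and time (the real numbers); $S_0$ initial situation; $\mathit{do}(a,s)$ the successor situation; $\phi[\sigma]$ is the situation-suppressed formula $\phi$ with situation argument $\sigma$ restored. Fluents are relation or function symbols with last argument a situation and other arguments objects; finitely many fluents, a finite set $\mathcal{A}$ of action types ($A$ has $|A|$ object arguments), finite set $\mathcal{O}$ of object constants (unique names, domain closure). A formula is uniform in $s$ if it mentions no situation term other than $s$ and does not mention $\mathit{Poss}$. A BAT is $\mathcal{D} = \mathcal{D}_0 \cup \mathcal{D}_{poss} \cup \mathcal{D}_{ssa} \cup \mathcal{D}_{ca} \cup \mathcal{D}_{co} \cup \Sigma$ (initial description uniform in $S_0$ with complete information, precondition axioms, successor state axioms, domain closure and unique name axioms for actions and objects, foundational axioms). Clock comparison: $f(\vec x,s)\bowtie v$ or $v\bowtie v'$ ($f$ functional fluent, $v,v'\in\mathbb{N}$, $\bowtie\in\{<,\leq,=,\geq,>\}$). Clocked formula: every atomic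 subformula mentioning a time term is a clock comparison; time-independent: no time term. A BAT is clocked if there is a distinguished action type $\mathit{wait}(t)$ (others have no time argument) and: functional fluents take time values and are $0$ at $S_0$; each functional fluent has successor state axiom $f(\vec o,\mathit{do}(a,s))=y \equiv \exists t\,(a=\mathit{wait}(t)\wedge y=f(\vec o,s)+t) \vee (\neg\exists t\, a=\mathit{wait}(t)) \wedge (\phi_f(\vec o,a,s)\wedge y=0 \vee \neg\phi_f(\vec o,a,s)\wedge y=f(\vec o,s))$ with $\phi_f$ time-independent, uniform in $s$; relational successor state axioms and precondition axioms have clocked right-hand sides uniform in $s$; $\mathit{Poss}(\mathit{wait}(t),s)\equiv\top$. $\mathcal{C}$ is the set of ground situation-suppressed clock (functional fluent) terms; $\nu_\sigma(\omega)=\tau$ iff $\mathcal{D}\models\omega[\sigma]=\tau$; $\nu+\tau$ adds $\tau$ to every value. For $u,v\geq0$: $u\sim_K v$ iff both $>K$, or both $\leq K$ with equal floors and equal ceilings; $\mathrm{fract}(v)=v-\lfloor v\rfloor$ if $v\leq K$, else $0$. $\nu\cong_K\nu'$ iff $\nu(\omega)\sim_K\nu'(\omega)$ for all $\omega$ and $\mathrm{fract}(\nu(\omega))\leq\mathrm{fract}(\nu(\omega'))$ iff $\mathrm{fract}(\nu'(\omega))\leq\mathrm{fract}(\nu'(\omega'))$ for all $\omega,\omega'$. $\sigma_1\approx_{\mathcal{D}K}\sigma_2$ iff they entail the same ground relational fluent atoms and $\nu_{\sigma_1}\cong_K\nu_{\sigma_2}$; $[\sigma]_{\approx_{\mathcal{D}K}}$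 is the class of $\sigma$. $\mathrm{TSuccs}(\nu,K)$ is a computable finite set of nonnegative reals such that for every $\tau\geq0$ there is $\tau'\in\mathrm{TSuccs}(\nu,K)$ with $\nu+\tau\cong_K\nu+\tau'$. Golog: program expressions $\delta ::= \alpha \mid \phi? \mid \delta;\delta \mid \delta|\delta \mid \pi x.\,\delta \mid \delta^* \mid \delta\|\delta$, where action terms are time-suppressed (the program contains $\mathit{wait}()$ without argument), tests $\phi?$ test situation-suppressed clocked formulas, and $\pi x$ chooses an object. $\mathit{nil}:=\mathrm{True}?$. A program is $\Delta=(\mathcal{D},\delta)$. Transition semantics: $\mathrm{Trans}(A(\vec\rho),s,a,\delta',s')\equiv a=A(\vec\rho)\wedge\mathit{Poss}(a,s)\wedge\delta'=\mathit{nil}\wedge s'=\mathit{do}(a,s)$ for $A\neq\mathit{wait}$; $\mathrm{Trans}(\mathit{wait}(),s,a,\delta',s')\equiv\exists t.\,a=\mathit{wait}(t)\wedge\delta'=\mathit{nil}\wedge s'=\mathit{do}(a,s)$; $\mathrm{Trans}(\phi?,s,a,\delta',s')\equiv\mathrm{False}$; $\mathrm{Trans}(\delta_1;\delta_2,s,a,\delta',s')\equiv\exists\gamma(\delta'=(\gamma;\delta_2)\wedge\mathrm{Trans}(\delta_1,s,a,\gamma,s'))\vee\mathrm{Final}(\delta_1,s)\wedge\mathrm{Trans}(\delta_2,s,a,\delta',s')$; $\mathrm{Trans}(\delta_1|\delta_2,\dots)\equiv\mathrm{Trans}(\delta_1,\dots)\vee\mathrm{Trans}(\delta_2,\dots)$;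 $\mathrm{Trans}(\pi x.\delta,s,a,\delta',s')\equiv\exists v.\,\mathrm{Trans}(\delta^x_v,s,a,\delta',s')$; $\mathrm{Trans}(\delta^*,s,a,\delta',s')\equiv\exists\gamma(\delta'=(\gamma;\delta^* )\wedge\mathrm{Trans}(\delta,s,a,\gamma,s'))$; $\mathrm{Trans}(\delta_1\|\delta_2,s,a,\delta',s')\equiv\exists\gamma(\delta'=(\gamma\|\delta_2)\wedge\mathrm{Trans}(\delta_1,s,a,\gamma,s'))\vee\exists\gamma(\delta'=(\delta_1\|\gamma)\wedge\mathrm{Trans}(\delta_2,s,a,\gamma,s'))$. $\mathrm{Final}(\alpha,s)\equiv\mathrm{False}$; $\mathrm{Final}(\phi?,s)\equiv\phi[s]$; $\mathrm{Final}(\delta_1;\delta_2,s)\equiv\mathrm{Final}(\delta_1,s)\wedge\mathrm{Final}(\delta_2,s)$; $\mathrm{Final}(\delta_1|\delta_2,s)\equiv\mathrm{Final}(\delta_1,s)\vee\mathrm{Final}(\delta_2,s)$; $\mathrm{Final}(\pi x.\delta,s)\equiv\exists v.\,\mathrm{Final}(\delta^x_v,s)$; $\mathrm{Final}(\delta^*,s)\equiv\mathrm{True}$; $\mathrm{Final}(\delta_1\|\delta_2,s)\equiv\mathrm{Final}(\delta_1,s)\wedge\mathrm{Final}(\delta_2,s)$. $\mathrm{Trans}^*(\delta,s,\vec a,\delta',s')$ is the reflexive transitive closure of $\mathrm{Trans}$, with $\vec a$ the sequence of actions taken. An action sequence $\vec\alpha=\langle\alpha_1,\dots,\alpha_n\rangle$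 is a realization of $\Delta$ if $\mathcal{D}\models\mathrm{Trans}^*(\delta,S_0,\vec\alpha,\delta',\sigma')\wedge\mathrm{Final}(\delta',\sigma')$ for some $\delta',\sigma'$. Algorithm 2 (input $\mathcal{D},\delta_0,K$): set $\mathit{Open}:=\{(S_0,\delta_0)\}$, $V:=\emptyset$, $E:=\emptyset$. While $\mathit{Open}\neq\emptyset$: remove some $(\sigma,\delta)$ from $\mathit{Open}$; let $\mathit{Acts}:=\{A(\vec\rho)\mid A\in\mathcal{A}\setminus\{\mathit{wait}\},\vec\rho\in\mathcal{O}^{|A|}\}\cup\{\mathit{wait}(\tau)\mid\tau\in\mathrm{TSuccs}(\nu_\sigma,K)\}$; for each $\alpha\in\mathit{Acts}$ and each $(\delta',\sigma')$ with $\mathcal{D}\models\mathrm{Trans}(\delta,\sigma,\alpha,\delta',\sigma')$: if $([\sigma']_{\approx_{\mathcal{D}K}},\delta')\notin V$, add it to $V$ and add $(\sigma',\delta')$ to $\mathit{Open}$; add the edge $(([\sigma]_{\approx_{\mathcal{D}K}},\delta),([\sigma']_{\approx_{\mathcal{D}K}},\delta'))$ to $E$. Return $(V,([S_0]_{\approx_{\mathcal{D}K}},\delta_0),E)$. *)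

theory Defs
  imports Main Complex_Main
begin

section \<open>Clocked formulas (situation-suppressed)\<close>

datatype cmp = CLt | CLe | CEq | CGe | CGt

fun cmp_real :: "cmp \<Rightarrow> real \<Rightarrow> real \<Rightarrow> bool" where
  "cmp_real CLt x y = (x < y)"
| "cmp_real CLe x y = (x \<le> y)"
| "cmp_real CEq x y = (x = y)"
| "cmp_real CGe x y = (x \<ge> y)"
| "cmp_real CGt x y = (x > y)"

datatype ('o, 'v) oterm = Obj 'o | Var 'v

text \<open>Situation-suppressed clocked formulas.  The only atoms mentioning time terms are
  clock comparisons f(x) op v and v op v' with natural-number constants v, v'.\<close>
datatype ('f, 'g, 'o, 'v) fm =
    FTrue
  | Rel 'f "('o, 'v) oterm list"
  | OEq "('o, 'v) oterm" "('o, 'v) oterm"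
  | Clk 'g "('o, 'v) oterm list" cmp nat
  | NumCmp nat cmp nat
  | Neg "('f, 'g, 'o, 'v) fm"
  | Conj "('f, 'g, 'o, 'v) fm" "('f, 'g, 'o, 'v) fm"
  | Disj "('f, 'g, 'o, 'v) fm" "('f, 'g, 'o, 'v) fm"
  | Ex 'v "('f, 'g, 'o, 'v) fm"

text \<open>The values of all ground fluents in a situation: relational fluents and clocks
  (ground functional fluent terms).\<close>
type_synonym ('f, 'g, 'o) state = "('f \<Rightarrow> 'o list \<Rightarrow> bool) \<times> ('g \<times> 'o list \<Rightarrow> real)"

fun teval :: "('v \<Rightarrow> 'o) \<Rightarrow> ('o, 'v) oterm \<Rightarrow> 'o" where
  "teval env (Obj o') = o'"
| "teval env (Var x) = env x"

fun holds :: "'o set \<Rightarrow> ('f, 'g, 'o) state \<Rightarrow> ('v \<Rightarrow> 'o) \<Rightarrow> ('f, 'g, 'o, 'v) fm \<Rightarrow> bool" where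
  "holds Ob st env FTrue = True"
| "holds Ob st env (Rel F ts) = fst st F (map (teval env) ts)"
| "holds Ob st env (OEq t1 t2) = (teval env t1 = teval env t2)"
| "holds Ob st env (Clk g ts c v) = cmp_real c (snd st (g, map (teval env) ts)) (real v)"
| "holds Ob st env (NumCmp v c v') = cmp_real c (real v) (real v')"
| "holds Ob st env (Neg \<phi>) = (\<not> holds Ob st env \<phi>)"
| "holds Ob st env (Conj \<phi> \<psi>) = (holds Ob st env \<phi> \<and> holds Ob st env \<psi>)"
| "holds Ob st env (Disj \<phi> \<psi>) = (holds Ob st env \<phi> \<or> holds Ob st env \<psi>)"
| "holds Ob st env (Ex x \<phi>) = (\<exists>o'\<in>Ob. holds Ob st (env(x := o')) \<phi>)"

fun fv_t :: "('o, 'v) oterm \<Rightarrow> 'v set" where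
  "fv_t (Obj _) = {}"
| "fv_t (Var x) = {x}"

fun consts_t :: "('o, 'v) oterm \<Rightarrow> 'o set" where
  "consts_t (Obj o') = {o'}"
| "consts_t (Var _) = {}"

fun fv_fm :: "('f, 'g, 'o, 'v) fm \<Rightarrow> 'v set" where
  "fv_fm FTrue = {}"
| "fv_fm (Rel F ts) = (\<Union>t\<in>set ts. fv_t t)"
| "fv_fm (OEq t1 t2) = fv_t t1 \<union> fv_t t2"
| "fv_fm (Clk g ts c v) = (\<Union>t\<in>set ts. fv_t t)"
| "fv_fm (NumCmp v c v') = {}"
| "fv_fm (Neg \<phi>) = fv_fm \<phi>"
| "fv_fm (Conj \<phi> \<psi>) = fv_fm \<phi> \<union> fv_fm \<psi>"
| "fv_fm (Disj \<phi> \<psi>) = fv_fm \<phi> \<union> fv_fm \<psi>"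
| "fv_fm (Ex x \<phi>) = fv_fm \<phi> - {x}"

fun nums_fm :: "('f, 'g, 'o, 'v) fm \<Rightarrow> nat set" where
  "nums_fm (Clk g ts c v) = {v}"
| "nums_fm (NumCmp v c v') = {v, v'}"
| "nums_fm (Neg \<phi>) = nums_fm \<phi>"
| "nums_fm (Conj \<phi> \<psi>) = nums_fm \<phi> \<union> nums_fm \<psi>"
| "nums_fm (Disj \<phi> \<psi>) = nums_fm \<phi> \<union> nums_fm \<psi>"
| "nums_fm (Ex x \<phi>) = nums_fm \<phi>"
| "nums_fm _ = {}"

fun time_indep :: "('f, 'g, 'o, 'v) fm \<Rightarrow> bool" where
  "time_indep (Clk g ts c v) = False"
| "time_indep (NumCmp v c v') = False"
| "time_indep (Neg \<phi>) = time_indep \<phi>"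
| "time_indep (Conj \<phi> \<psi>) = (time_indep \<phi> \<and> time_indep \<psi>)"
| "time_indep (Disj \<phi> \<psi>) = (time_indep \<phi> \<and> time_indep \<psi>)"
| "time_indep (Ex x \<phi>) = time_indep \<phi>"
| "time_indep _ = True"

section \<open>Clocked basic action theories\<close>

text \<open>A clocked BAT, given semantically through its (ground-instantiated) axioms.
  Objects: the finite set objs (domain closure + unique names).
  poss A os: right-hand side of the precondition axiom of "A(os)".
  ssa (Some (A, os)) F xs: right-hand side of the successor state axiom of
  "F(xs)" for action "A(os)"; "ssa None F xs": the same for the
  action "wait(t)" (cannot depend on t, since clocked formulas may not
  mention the time term t).
  reset A os g xs: the time-independent condition \<phi>_g under which action
  "A(os)" resets clock "g(xs)".\<close>
record ('f, 'g, 'a, 'o, 'v) bat =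
  objs :: "'o set"
  rfl :: "'f set"
  ffl :: "'g set"
  atypes :: "'a set"
  rar :: "'f \<Rightarrow> nat"
  far :: "'g \<Rightarrow> nat"
  aar :: "'a \<Rightarrow> nat"
  init :: "'f \<Rightarrow> 'o list \<Rightarrow> bool"
  poss :: "'a \<Rightarrow> 'o list \<Rightarrow> ('f, 'g, 'o, 'v) fm"
  ssa :: "('a \<times> 'o list) option \<Rightarrow> 'f \<Rightarrow> 'o list \<Rightarrow> ('f, 'g, 'o, 'v) fm"
  reset :: "'a \<Rightarrow> 'o list \<Rightarrow> 'g \<Rightarrow> 'o list \<Rightarrow> ('f, 'g, 'o, 'v) fm"

datatype ('a, 'o) action = Act 'a "'o list" | Wait real

text \<open>Ground situations: "do(a, s)" is "a # s", S0 is "[]".\<close>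
type_synonym ('a, 'o) sit = "('a, 'o) action list"

definition args :: "('f, 'g, 'a, 'o, 'v) bat \<Rightarrow> nat \<Rightarrow> 'o list set" where
  "args D n = {os. set os \<subseteq> objs D \<and> length os = n}"

definition clocks :: "('f, 'g, 'a, 'o, 'v) bat \<Rightarrow> ('g \<times> 'o list) set" where
  "clocks D = {(g, os). g \<in> ffl D \<and> os \<in> args D (far D g)}"

definition env0 :: "'v \<Rightarrow> 'o" where "env0 = (\<lambda>_. undefined)"

fun step :: "('f, 'g, 'a, 'o, 'v) bat \<Rightarrow> ('a, 'o) action \<Rightarrow> ('f, 'g, 'o) state \<Rightarrow> ('f, 'g, 'o) state" where
  "step D (Act A os) st =
     ((\<lambda>F xs. holds (objs D) st env0 (ssa D (Some (A, os)) F xs)),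
      (\<lambda>(g, xs). if holds (objs D) st env0 (reset D A os g xs) then 0 else snd st (g, xs)))"
| "step D (Wait t) st =
     ((\<lambda>F xs. holds (objs D) st env0 (ssa D None F xs)),
      (\<lambda>\<omega>. snd st \<omega> + t))"

text \<open>The (unique) values of all ground fluents at a ground situation, as entailed by D
  (complete initial information; functional fluents are 0 at S0).\<close>
primrec st :: "('f, 'g, 'a, 'o, 'v) bat \<Rightarrow> ('a, 'o) sit \<Rightarrow> ('f, 'g, 'o) state" where
  "st D [] = (init D, \<lambda>_. 0)"
| "st D (a # s) = step D a (st D s)"

definition models :: "('f, 'g, 'a, 'o, 'v) bat \<Rightarrow> ('f, 'g, 'o, 'v) fm \<Rightarrow> ('a, 'o) sit \<Rightarrow> bool" where
  "models D \<phi> \<sigma> = holds (objs D) (st D \<sigma>) env0 \<phi>"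

definition val :: "('f, 'g, 'a, 'o, 'v) bat \<Rightarrow> ('a, 'o) sit \<Rightarrow> ('g \<times> 'o list \<Rightarrow> real)" where
  "val D \<sigma> = snd (st D \<sigma>)"

fun wf_t :: "('f, 'g, 'a, 'o, 'v) bat \<Rightarrow> ('o, 'v) oterm \<Rightarrow> bool" where
  "wf_t D (Obj o') = (o' \<in> objs D)"
| "wf_t D (Var x) = True"

fun wf_fm :: "('f, 'g, 'a, 'o, 'v) bat \<Rightarrow> ('f, 'g, 'o, 'v) fm \<Rightarrow> bool" where
  "wf_fm D FTrue = True"
| "wf_fm D (Rel F ts) = (F \<in> rfl D \<and> length ts = rar D F \<and> (\<forall>t\<in>set ts. wf_t D t))"
| "wf_fm D (OEq t1 t2) = (wf_t D t1 \<and> wf_t D t2)"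
| "wf_fm D (Clk g ts c v) = (g \<in> ffl D \<and> length ts = far D g \<and> (\<forall>t\<in>set ts. wf_t D t))"
| "wf_fm D (NumCmp v c v') = True"
| "wf_fm D (Neg \<phi>) = wf_fm D \<phi>"
| "wf_fm D (Conj \<phi> \<psi>) = (wf_fm D \<phi> \<and> wf_fm D \<psi>)"
| "wf_fm D (Disj \<phi> \<psi>) = (wf_fm D \<phi> \<and> wf_fm D \<psi>)"
| "wf_fm D (Ex x \<phi>) = wf_fm D \<phi>"

definition closed_wf :: "('f, 'g, 'a, 'o, 'v) bat \<Rightarrow> ('f, 'g, 'o, 'v) fm \<Rightarrow> bool" where
  "closed_wf D \<phi> = (wf_fm D \<phi> \<and> fv_fm \<phi> = {})"

definition clocked_bat :: "('f, 'g, 'a, 'o, 'v) bat \<Rightarrow> bool" where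
  "clocked_bat D =
    (finite (objs D) \<and> finite (rfl D) \<and> finite (ffl D) \<and> finite (atypes D) \<and>
     (\<forall>A\<in>atypes D. \<forall>os\<in>args D (aar D A). closed_wf D (poss D A os)) \<and>
     (\<forall>F\<in>rfl D. \<forall>xs\<in>args D (rar D F).
        closed_wf D (ssa D None F xs) \<and>
        (\<forall>A\<in>atypes D. \<forall>os\<in>args D (aar D A). closed_wf D (ssa D (Some (A, os)) F xs))) \<and>
     (\<forall>g\<in>ffl D. \<forall>xs\<in>args D (far D g). \<forall>A\<in>atypes D. \<forall>os\<in>args D (aar D A).
        closed_wf D (reset D A os g xs) \<and> time_indep (reset D A os g xs)))"

definition bat_nums :: "('f, 'g, 'a, 'o, 'v) bat \<Rightarrow> nat set" where
  "bat_nums D =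
    (\<Union>A\<in>atypes D. \<Union>os\<in>args D (aar D A). nums_fm (poss D A os)) \<union>
    (\<Union>F\<in>rfl D. \<Union>xs\<in>args D (rar D F). nums_fm (ssa D None F xs) \<union>
        (\<Union>A\<in>atypes D. \<Union>os\<in>args D (aar D A). nums_fm (ssa D (Some (A, os)) F xs))) \<union>
    (\<Union>g\<in>ffl D. \<Union>xs\<in>args D (far D g). \<Union>A\<in>atypes D. \<Union>os\<in>args D (aar D A).
        nums_fm (reset D A os g xs))"

section \<open>Golog programs\<close>

datatype ('f, 'g, 'a, 'o, 'v) prog =
    PAct 'a "('o, 'v) oterm list"     \<comment> \<open>primitive action A(\<rho>), A \<noteq> wait\<close>
  | PWait
  | Test "('f, 'g, 'o, 'v) fm"
  | Seq "('f, 'g, 'a, 'o, 'v) prog" "('f, 'g, 'a, 'o, 'v) prog"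
  | Choice "('f, 'g, 'a, 'o, 'v) prog" "('f, 'g, 'a, 'o, 'v) prog"
  | Pi 'v "('f, 'g, 'a, 'o, 'v) prog"
  | Star "('f, 'g, 'a, 'o, 'v) prog"
  | Conc "('f, 'g, 'a, 'o, 'v) prog" "('f, 'g, 'a, 'o, 'v) prog"

definition Nil_prog :: "('f, 'g, 'a, 'o, 'v) prog" where "Nil_prog = Test FTrue"

fun subst_t :: "'v \<Rightarrow> 'o \<Rightarrow> ('o, 'v) oterm \<Rightarrow> ('o, 'v) oterm" where
  "subst_t x v (Obj o') = Obj o'"
| "subst_t x v (Var y) = (if y = x then Obj v else Var y)"

fun subst_fm :: "'v \<Rightarrow> 'o \<Rightarrow> ('f, 'g, 'o, 'v) fm \<Rightarrow> ('f, 'g, 'o, 'v) fm" where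
  "subst_fm x v FTrue = FTrue"
| "subst_fm x v (Rel F ts) = Rel F (map (subst_t x v) ts)"
| "subst_fm x v (OEq t1 t2) = OEq (subst_t x v t1) (subst_t x v t2)"
| "subst_fm x v (Clk g ts c n) = Clk g (map (subst_t x v) ts) c n"
| "subst_fm x v (NumCmp n c n') = NumCmp n c n'"
| "subst_fm x v (Neg \<phi>) = Neg (subst_fm x v \<phi>)"
| "subst_fm x v (Conj \<phi> \<psi>) = Conj (subst_fm x v \<phi>) (subst_fm x v \<psi>)"
| "subst_fm x v (Disj \<phi> \<psi>) = Disj (subst_fm x v \<phi>) (subst_fm x v \<psi>)"
| "subst_fm x v (Ex y \<phi>) = (if y = x then Ex y \<phi> else Ex y (subst_fm x v \<phi>))"

fun subst_p :: "'v \<Rightarrow> 'o \<Rightarrow> ('f, 'g, 'a, 'o, 'v) prog \<Rightarrow> ('f, 'g, 'a, 'o, 'v) prog" where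
  "subst_p x v (PAct A ts) = PAct A (map (subst_t x v) ts)"
| "subst_p x v PWait = PWait"
| "subst_p x v (Test \<phi>) = Test (subst_fm x v \<phi>)"
| "subst_p x v (Seq p q) = Seq (subst_p x v p) (subst_p x v q)"
| "subst_p x v (Choice p q) = Choice (subst_p x v p) (subst_p x v q)"
| "subst_p x v (Pi y p) = (if y = x then Pi y p else Pi y (subst_p x v p))"
| "subst_p x v (Star p) = Star (subst_p x v p)"
| "subst_p x v (Conc p q) = Conc (subst_p x v p) (subst_p x v q)"

primrec psize :: "('f, 'g, 'a, 'o, 'v) prog \<Rightarrow> nat" where
  "psize (PAct A ts) = 1"
| "psize PWait = 1"
| "psize (Test \<phi>) = 1"
| "psize (Seq p q) = psize p + psize q + 1"
| "psize (Choice p q) = psize p + psize q + 1"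
| "psize (Pi y p) = psize p + 1"
| "psize (Star p) = psize p + 1"
| "psize (Conc p q) = psize p + psize q + 1"

lemma psize_subst_p [simp]: "psize (subst_p x v p) = psize p"
  by (induction p) auto

function final :: "('f, 'g, 'a, 'o, 'v) bat \<Rightarrow> ('f, 'g, 'a, 'o, 'v) prog \<Rightarrow> ('a, 'o) sit \<Rightarrow> bool" where
  "final D (PAct A ts) s = False"
| "final D PWait s = False"
| "final D (Test \<phi>) s = models D \<phi> s"
| "final D (Seq p q) s = (final D p s \<and> final D q s)"
| "final D (Choice p q) s = (final D p s \<or> final D q s)"
| "final D (Pi x p) s = (\<exists>v\<in>objs D. final D (subst_p x v p) s)"
| "final D (Star p) s = True"
| "final D (Conc p q) s = (final D p s \<and> final D q s)"
  by pat_completeness auto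
termination by (relation "measure (\<lambda>(D, p, s). psize p)") auto

function trans :: "('f, 'g, 'a, 'o, 'v) bat \<Rightarrow> ('f, 'g, 'a, 'o, 'v) prog \<Rightarrow> ('a, 'o) sit \<Rightarrow>
    ('a, 'o) action \<Rightarrow> ('f, 'g, 'a, 'o, 'v) prog \<Rightarrow> ('a, 'o) sit \<Rightarrow> bool" where
  "trans D (PAct A ts) s a p' s' =
     (\<exists>os. ts = map Obj os \<and> a = Act A os \<and> models D (poss D A os) s \<and> p' = Nil_prog \<and> s' = a # s)"
| "trans D PWait s a p' s' = (\<exists>t\<ge>0. a = Wait t \<and> p' = Nil_prog \<and> s' = a # s)"
| "trans D (Test \<phi>) s a p' s' = False"
| "trans D (Seq p q) s a p' s' =
     ((\<exists>\<gamma>. p' = Seq \<gamma> q \<and> trans D p s a \<gamma> s') \<or> (final D p s \<and> trans D q s a p' s'))"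
| "trans D (Choice p q) s a p' s' = (trans D p s a p' s' \<or> trans D q s a p' s')"
| "trans D (Pi x p) s a p' s' = (\<exists>v\<in>objs D. trans D (subst_p x v p) s a p' s')"
| "trans D (Star p) s a p' s' = (\<exists>\<gamma>. p' = Seq \<gamma> (Star p) \<and> trans D p s a \<gamma> s')"
| "trans D (Conc p q) s a p' s' =
     ((\<exists>\<gamma>. p' = Conc \<gamma> q \<and> trans D p s a \<gamma> s') \<or> (\<exists>\<gamma>. p' = Conc p \<gamma> \<and> trans D q s a \<gamma> s'))"
  by pat_completeness auto
termination by (relation "measure (\<lambda>(D, p, s, a, p', s'). psize p)") auto

text \<open>Trans*, with the list of actions taken (in execution order).\<close>
inductive trans_star :: "('f, 'g, 'a, 'o, 'v) bat \<Rightarrow> ('f, 'g, 'a, 'o, 'v) prog \<Rightarrow> ('a, 'o) sit \<Rightarrow>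
    ('a, 'o) action list \<Rightarrow> ('f, 'g, 'a, 'o, 'v) prog \<Rightarrow> ('a, 'o) sit \<Rightarrow> bool"
  for D where
  refl: "trans_star D p s [] p s"
| step: "trans D p s a q s1 \<Longrightarrow> trans_star D q s1 as p' s' \<Longrightarrow> trans_star D p s (a # as) p' s'"

definition realization :: "('f, 'g, 'a, 'o, 'v) bat \<Rightarrow> ('f, 'g, 'a, 'o, 'v) prog \<Rightarrow>
    ('a, 'o) action list \<Rightarrow> bool" where
  "realization D p as = (\<exists>p' \<sigma>'. trans_star D p [] as p' \<sigma>' \<and> final D p' \<sigma>')"

fun fv_p :: "('f, 'g, 'a, 'o, 'v) prog \<Rightarrow> 'v set" where
  "fv_p (PAct A ts) = (\<Union>t\<in>set ts. fv_t t)"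
| "fv_p PWait = {}"
| "fv_p (Test \<phi>) = fv_fm \<phi>"
| "fv_p (Seq p q) = fv_p p \<union> fv_p q"
| "fv_p (Choice p q) = fv_p p \<union> fv_p q"
| "fv_p (Pi x p) = fv_p p - {x}"
| "fv_p (Star p) = fv_p p"
| "fv_p (Conc p q) = fv_p p \<union> fv_p q"

fun wf_p :: "('f, 'g, 'a, 'o, 'v) bat \<Rightarrow> ('f, 'g, 'a, 'o, 'v) prog \<Rightarrow> bool" where
  "wf_p D (PAct A ts) = (A \<in> atypes D \<and> length ts = aar D A \<and> (\<forall>t\<in>set ts. wf_t D t))"
| "wf_p D PWait = True"
| "wf_p D (Test \<phi>) = wf_fm D \<phi>"
| "wf_p D (Seq p q) = (wf_p D p \<and> wf_p D q)"
| "wf_p D (Choice p q) = (wf_p D p \<and> wf_p D q)"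
| "wf_p D (Pi x p) = wf_p D p"
| "wf_p D (Star p) = wf_p D p"
| "wf_p D (Conc p q) = (wf_p D p \<and> wf_p D q)"

definition program :: "('f, 'g, 'a, 'o, 'v) bat \<Rightarrow> ('f, 'g, 'a, 'o, 'v) prog \<Rightarrow> bool" where
  "program D p = (wf_p D p \<and> fv_p p = {})"

fun nums_p :: "('f, 'g, 'a, 'o, 'v) prog \<Rightarrow> nat set" where
  "nums_p (Test \<phi>) = nums_fm \<phi>"
| "nums_p (Seq p q) = nums_p p \<union> nums_p q"
| "nums_p (Choice p q) = nums_p p \<union> nums_p q"
| "nums_p (Pi x p) = nums_p p"
| "nums_p (Star p) = nums_p p"
| "nums_p (Conc p q) = nums_p p \<union> nums_p q"
| "nums_p _ = {}"

section \<open>Clock regions and situation equivalence\<close>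

definition sim_K :: "nat \<Rightarrow> real \<Rightarrow> real \<Rightarrow> bool" where
  "sim_K K u v = ((u > real K \<and> v > real K) \<or>
     (u \<le> real K \<and> v \<le> real K \<and> \<lfloor>u\<rfloor> = \<lfloor>v\<rfloor> \<and> \<lceil>u\<rceil> = \<lceil>v\<rceil>))"

definition fract_K :: "nat \<Rightarrow> real \<Rightarrow> real" where
  "fract_K K v = (if v \<le> real K then v - real_of_int \<lfloor>v\<rfloor> else 0)"

definition reg_eq :: "('c set) \<Rightarrow> nat \<Rightarrow> ('c \<Rightarrow> real) \<Rightarrow> ('c \<Rightarrow> real) \<Rightarrow> bool" where
  "reg_eq C K \<nu> \<nu>' =
    ((\<forall>\<omega>\<in>C. sim_K K (\<nu> \<omega>) (\<nu>' \<omega>)) \<and>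
     (\<forall>\<omega>\<in>C. \<forall>\<omega>'\<in>C. (fract_K K (\<nu> \<omega>) \<le> fract_K K (\<nu> \<omega>')) \<longleftrightarrow>
                      (fract_K K (\<nu>' \<omega>) \<le> fract_K K (\<nu>' \<omega>'))))"

definition vplus :: "('c \<Rightarrow> real) \<Rightarrow> real \<Rightarrow> ('c \<Rightarrow> real)" where
  "vplus \<nu> \<tau> = (\<lambda>\<omega>. \<nu> \<omega> + \<tau>)"

definition sit_eq :: "('f, 'g, 'a, 'o, 'v) bat \<Rightarrow> nat \<Rightarrow> ('a, 'o) sit \<Rightarrow> ('a, 'o) sit \<Rightarrow> bool" where
  "sit_eq D K \<sigma>1 \<sigma>2 =
    ((\<forall>F\<in>rfl D. \<forall>xs\<in>args D (rar D F). fst (st D \<sigma>1) F xs = fst (st D \<sigma>2) F xs) \<and>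
     reg_eq (clocks D) K (val D \<sigma>1) (val D \<sigma>2))"

definition cls :: "('f, 'g, 'a, 'o, 'v) bat \<Rightarrow> nat \<Rightarrow> ('a, 'o) sit \<Rightarrow> ('a, 'o) sit set" where
  "cls D K \<sigma> = {\<sigma>'. sit_eq D K \<sigma> \<sigma>'}"

text \<open>Specification of TSuccs (a finite set of nonnegative reals representing all regions
  reachable by letting time elapse).\<close>
definition tsuccs_spec :: "('f, 'g, 'a, 'o, 'v) bat \<Rightarrow> (('g \<times> 'o list \<Rightarrow> real) \<Rightarrow> nat \<Rightarrow> real set) \<Rightarrow> bool" where
  "tsuccs_spec D TS =
    (\<forall>\<nu> K. (\<forall>\<omega>\<in>clocks D. \<nu> \<omega> \<ge> 0) \<longrightarrow>
       finite (TS \<nu> K) \<and> (\<forall>\<tau>\<in>TS \<nu> K. \<tau> \<ge> 0) \<and>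
       (\<forall>\<tau>\<ge>0. \<exists>\<tau>'\<in>TS \<nu> K. reg_eq (clocks D) K (vplus \<nu> \<tau>) (vplus \<nu> \<tau>')))"

section \<open>Algorithm 2\<close>

type_synonym ('f, 'g, 'a, 'o, 'v) tstate = "('a, 'o) sit set \<times> ('f, 'g, 'a, 'o, 'v) prog"

definition acts :: "('f, 'g, 'a, 'o, 'v) bat \<Rightarrow> nat \<Rightarrow> (('g \<times> 'o list \<Rightarrow> real) \<Rightarrow> nat \<Rightarrow> real set) \<Rightarrow>
    ('a, 'o) sit \<Rightarrow> ('a, 'o) action set" where
  "acts D K TS \<sigma> = {Act A os | A os. A \<in> atypes D \<and> os \<in> args D (aar D A)} \<union>
                    {Wait \<tau> | \<tau>. \<tau> \<in> TS (val D \<sigma>) K}"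

definition succs :: "('f, 'g, 'a, 'o, 'v) bat \<Rightarrow> nat \<Rightarrow> (('g \<times> 'o list \<Rightarrow> real) \<Rightarrow> nat \<Rightarrow> real set) \<Rightarrow>
    ('a, 'o) sit \<Rightarrow> ('f, 'g, 'a, 'o, 'v) prog \<Rightarrow> (('f, 'g, 'a, 'o, 'v) prog \<times> ('a, 'o) sit) set" where
  "succs D K TS \<sigma> p = {(p', \<sigma>'). \<exists>\<alpha>\<in>acts D K TS \<sigma>. trans D p \<sigma> \<alpha> p' \<sigma>'}"

text \<open>Configurations of Algorithm 2: (Open, V, E, current outer-loop item with the
  successor pairs still to be processed by the inner loop).\<close>
type_synonym ('f, 'g, 'a, 'o, 'v) aconf =
  "(('a, 'o) sit \<times> ('f, 'g, 'a, 'o, 'v) prog) set \<times>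
   ('f, 'g, 'a, 'o, 'v) tstate set \<times>
   (('f, 'g, 'a, 'o, 'v) tstate \<times> ('f, 'g, 'a, 'o, 'v) tstate) set \<times>
   (('a, 'o) sit \<times> ('f, 'g, 'a, 'o, 'v) prog \<times> (('f, 'g, 'a, 'o, 'v) prog \<times> ('a, 'o) sit) set) option"

inductive alg_step :: "('f, 'g, 'a, 'o, 'v) bat \<Rightarrow> nat \<Rightarrow> (('g \<times> 'o list \<Rightarrow> real) \<Rightarrow> nat \<Rightarrow> real set) \<Rightarrow>
    ('f, 'g, 'a, 'o, 'v) aconf \<Rightarrow> ('f, 'g, 'a, 'o, 'v) aconf \<Rightarrow> bool"
  for D K TS where
  pick: "(\<sigma>, p) \<in> Opn \<Longrightarrow>
     alg_step D K TS (Opn, V, E, None) (Opn - {(\<sigma>, p)}, V, E, Some (\<sigma>, p, succs D K TS \<sigma> p))"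
| process: "(p', \<sigma>') \<in> R \<Longrightarrow>
     alg_step D K TS (Opn, V, E, Some (\<sigma>, p, R))
       (if (cls D K \<sigma>', p') \<notin> V then Opn \<union> {(\<sigma>', p')} else Opn,
        V \<union> {(cls D K \<sigma>', p')},
        E \<union> {((cls D K \<sigma>, p), (cls D K \<sigma>', p'))},
        Some (\<sigma>, p, R - {(p', \<sigma>')}))"
| finish: "alg_step D K TS (Opn, V, E, Some (\<sigma>, p, {})) (Opn, V, E, None)"

text \<open>(V, init, E) is a transition system returned by (some run of) Algorithm 2 on
  input (D, \<delta>0, K).\<close>
definition alg2_returns :: "('f, 'g, 'a, 'o, 'v) bat \<Rightarrow> nat \<Rightarrow> (('g \<times> 'o list \<Rightarrow> real) \<Rightarrow> nat \<Rightarrow> real set) \<Rightarrow>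
    ('f, 'g, 'a, 'o, 'v) prog \<Rightarrow> ('f, 'g, 'a, 'o, 'v) tstate set \<Rightarrow> ('f, 'g, 'a, 'o, 'v) tstate \<Rightarrow>
    (('f, 'g, 'a, 'o, 'v) tstate \<times> ('f, 'g, 'a, 'o, 'v) tstate) set \<Rightarrow> bool" where
  "alg2_returns D K TS p0 V q0 E =
    (q0 = (cls D K [], p0) \<and>
     (alg_step D K TS)\<^sup>*\<^sup>* ({([], p0)}, {}, {}, None) ({}, V, E, None))"

end

theory Submission
  imports Defs
begin


lemma ceil_floor_frac: "\<lceil>x::real\<rceil> = \<lfloor>x\<rfloor> + (if frac x = 0 then 0 else 1)"
  by (simp add: ceiling_altdef frac_def del: frac_eq_0_iff)

lemma sim_K_alt: "sim_K K u u' \<longleftrightarrow> (u > real K \<and> u' > real K) \<or>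
   (u \<le> real K \<and> u' \<le> real K \<and> \<lfloor>u\<rfloor> = \<lfloor>u'\<rfloor> \<and> (frac u = 0 \<longleftrightarrow> frac u' = 0))"
  unfolding sim_K_def ceil_floor_frac by (auto split: if_splits)

lemma le_K_iff: "(u::real) \<le> real K \<longleftrightarrow> (\<lfloor>u\<rfloor> < int K \<or> (\<lfloor>u\<rfloor> = int K \<and> frac u = 0))"
proof -
  have "u = of_int \<lfloor>u\<rfloor> + frac u" by (simp add: frac_def)
  moreover have "frac u < 1" "frac u \<ge> 0" by (rule frac_lt_1, simp)
  ultimately show ?thesis
    by (smt (verit, ccfv_SIG) of_int_less_iff of_int_of_nat_eq floor_less_iff floor_of_nat)
qed

lemma sim_K_refl: "sim_K K u u" by (auto simp: sim_K_def)
lemma sim_K_sym: "sim_K K u v \<Longrightarrow> sim_K K v u" by (auto simp: sim_K_def)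
lemma sim_K_trans: "sim_K K u v \<Longrightarrow> sim_K K v w \<Longrightarrow> sim_K K u w" by (auto simp: sim_K_def)

lemma fract_K_ge0: "fract_K K v \<ge> 0" by (simp add: fract_K_def)

lemma fract_K_le0: "fract_K K v \<le> 0 \<longleftrightarrow> (v > real K \<or> frac v = 0)"
  using frac_ge_0[of v] unfolding fract_K_def frac_def[symmetric] by (auto simp del: frac_eq_0_iff frac_ge_0)

lemma fract_K_zero: "sim_K K u v \<Longrightarrow> fract_K K u \<le> 0 \<longleftrightarrow> fract_K K v \<le> 0"
  unfolding fract_K_le0 sim_K_alt by (auto simp del: frac_eq_0_iff)

lemma reg_eq_refl: "reg_eq C K \<nu> \<nu>" by (auto simp: reg_eq_def sim_K_refl)
lemma reg_eq_sym: "reg_eq C K \<nu> \<nu>' \<Longrightarrow> reg_eq C K \<nu>' \<nu>" by (auto simp: reg_eq_def sim_K_sym)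
lemma reg_eq_trans: "reg_eq C K \<nu>1 \<nu>2 \<Longrightarrow> reg_eq C K \<nu>2 \<nu>3 \<Longrightarrow> reg_eq C K \<nu>1 \<nu>3"
  unfolding reg_eq_def by (meson sim_K_trans)

lemma cmp_sim: assumes "sim_K K u u'" "v \<le> K"
  shows "cmp_real c u (real v) \<longleftrightarrow> cmp_real c u' (real v)"
proof -
  have lt: "u < real v \<longleftrightarrow> u' < real v" and le: "u \<le> real v \<longleftrightarrow> u' \<le> real v"
  proof -
    show "u < real v \<longleftrightarrow> u' < real v"
      using assms floor_less_iff[of u "int v"] floor_less_iff[of u' "int v"] unfolding sim_K_def by auto
    show "u \<le> real v \<longleftrightarrow> u' \<le> real v"
      using assms ceiling_le_iff[of u "int v"] ceiling_le_iff[of u' "int v"] unfolding sim_K_def by auto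
  qed
  show ?thesis by (cases c) (use lt le in auto)
qed

lemma reg_reset: assumes "reg_eq C K \<nu>1 \<nu>2"
  shows "reg_eq C K (\<lambda>\<omega>. if r \<omega> then 0 else \<nu>1 \<omega>) (\<lambda>\<omega>. if r \<omega> then 0 else \<nu>2 \<omega>)"
proof -
  have z: "fract_K K 0 = 0" by (simp add: fract_K_def)
  have s0: "sim_K K 0 0" by (rule sim_K_refl)
  show ?thesis using assms unfolding reg_eq_def
    using fract_K_zero fract_K_ge0 z s0
    by (smt (verit))
qed

lemma pick_point:
  fixes P :: "(real \<times> real) set"
  assumes fin: "finite P" and z: "(0,0) \<in> P"
    and rng: "\<And>a a'. (a,a') \<in> P \<Longrightarrow> 0 \<le> a \<and> a < 1 \<and> 0 \<le> a' \<and> a' < 1"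
    and ord: "\<And>a a' b b'. (a,a') \<in> P \<Longrightarrow> (b,b') \<in> P \<Longrightarrow> (a \<le> b \<longleftrightarrow> a' \<le> b')"
    and g: "0 < g" "g \<le> 1"
  shows "\<exists>g'. 0 < g' \<and> g' \<le> 1 \<and> (g = 1 \<longleftrightarrow> g' = 1) \<and>
           (\<forall>a a'. (a,a') \<in> P \<longrightarrow> (a < g \<longleftrightarrow> a' < g') \<and> (a = g \<longleftrightarrow> a' = g'))"
proof (cases "g = 1")
  case True
  then show ?thesis using rng by (intro exI[of _ 1]) force
next
  case gne: False
  show ?thesis
  proof (cases "\<exists>a a'. (a,a') \<in> P \<and> a = g")
    case True
    then obtain a' where aP: "(g,a') \<in> P" by blast
    have "\<not> g \<le> 0" using g by auto
    hence a'pos: "0 < a'" using ord[OF aP z] by auto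
    have a'lt: "a' < 1" using rng[OF aP] by auto
    show ?thesis
    proof (intro exI[of _ a'] conjI allI impI)
      fix b b' assume bP: "(b,b') \<in> P"
      show "b < g \<longleftrightarrow> b' < a'" using ord[OF aP bP] by auto
      show "b = g \<longleftrightarrow> b' = a'" using ord[OF aP bP] ord[OF bP aP] by auto
    qed (use a'pos a'lt gne in auto)
  next
    case noeq: False
    define Lset where "Lset = snd ` {q\<in>P. fst q < g}"
    define Uset where "Uset = insert 1 (snd ` {q\<in>P. fst q > g})"
    define L where "L = Max Lset"
    define U where "U = Min Uset"
    have finL: "finite Lset" "Lset \<noteq> {}" unfolding Lset_def using fin z g by (auto intro!: image_eqI[of _ _ "(0,0)"])
    have finU: "finite Uset" "Uset \<noteq> {}" unfolding Uset_def using fin by auto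
    have "L \<in> Lset" unfolding L_def using finL by (rule Max_in)
    then obtain a1 where a1: "(a1, L) \<in> P" "a1 < g" unfolding Lset_def by auto
    have Lge: "a' \<le> L" if "(a,a') \<in> P" "a < g" for a a'
    proof -
      have "a' \<in> Lset" unfolding Lset_def using that by (force intro: image_eqI[of _ _ "(a,a')"])
      thus ?thesis unfolding L_def using finL by simp
    qed
    have Ule: "U \<le> a'" if "(a,a') \<in> P" "a > g" for a a'
    proof -
      have "a' \<in> Uset" unfolding Uset_def using that by (force intro: image_eqI[of _ _ "(a,a')"])
      thus ?thesis unfolding U_def using finU by simp
    qed
    have U1: "U \<le> 1" unfolding U_def using finU by (intro Min_le) (auto simp: Uset_def)
    have "U \<in> Uset" unfolding U_def using finU by (rule Min_in)
    hence LU: "L < U"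
    proof (unfold Uset_def, elim insertE)
      assume "U = 1" thus "L < U" using rng[OF a1(1)] by auto
    next
      assume "U \<in> snd ` {q \<in> P. g < fst q}"
      then obtain b where b: "(b, U) \<in> P" "g < b" by auto
      have "\<not> b \<le> a1" using b a1 by auto
      thus "L < U" using ord[OF b(1) a1(1)] by auto
    qed
    have L0: "0 \<le> L" using rng[OF a1(1)] by auto
    show ?thesis
    proof (intro exI[of _ "(L+U)/2"] conjI allI impI)
      fix a a' assume aP: "(a,a') \<in> P"
      have "a \<noteq> g" using noeq aP by auto
      hence "a < g \<or> a > g" by auto
      thus "a < g \<longleftrightarrow> a' < (L+U)/2" "a = g \<longleftrightarrow> a' = (L+U)/2"
        using Lge[OF aP] Ule[OF aP] LU by auto
    qed (use L0 LU U1 gne in auto)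
  qed
qed

lemma shift1:
  fixes x x' t t' :: real
  assumes "\<lfloor>x\<rfloor> = \<lfloor>x'\<rfloor>" "frac x = 0 \<longleftrightarrow> frac x' = 0"
    "frac x + frac t < 1 \<longleftrightarrow> frac x' + frac t' < 1"
    "frac x + frac t = 1 \<longleftrightarrow> frac x' + frac t' = 1"
    "frac t = 0 \<longleftrightarrow> frac t' = 0" "\<lfloor>t\<rfloor> = \<lfloor>t'\<rfloor>"
  shows "\<lfloor>x+t\<rfloor> = \<lfloor>x'+t'\<rfloor>" "frac (x+t) = 0 \<longleftrightarrow> frac (x'+t') = 0"
proof -
  show "\<lfloor>x+t\<rfloor> = \<lfloor>x'+t'\<rfloor>" using assms by (simp add: floor_add)
  have a: "frac x \<ge> 0" "frac t \<ge> 0" "frac x' \<ge> 0" "frac t' \<ge> 0" by simp_all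
  show "frac (x+t) = 0 \<longleftrightarrow> frac (x'+t') = 0"
    unfolding frac_add using assms a by (auto simp del: frac_eq_0_iff frac_ge_0)
qed

lemma sim_shift:
  fixes x x' t t' :: real
  assumes sim: "sim_K K x x'" and t: "t \<ge> 0" "t' \<ge> 0"
    and c: "x \<le> real K \<Longrightarrow> (frac x + frac t < 1 \<longleftrightarrow> frac x' + frac t' < 1) \<and>
      (frac x + frac t = 1 \<longleftrightarrow> frac x' + frac t' = 1)"
    and ft: "frac t = 0 \<longleftrightarrow> frac t' = 0" "\<lfloor>t\<rfloor> = \<lfloor>t'\<rfloor>"
  shows "sim_K K (x+t) (x'+t')"
proof (cases "x > real K")
  case True
  then show ?thesis using sim t unfolding sim_K_def by auto
next
  case False
  hence h: "x \<le> real K" "x' \<le> real K" "\<lfloor>x\<rfloor> = \<lfloor>x'\<rfloor>" "frac x = 0 \<longleftrightarrow> frac x' = 0"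
    using sim unfolding sim_K_alt by auto
  have e: "\<lfloor>x+t\<rfloor> = \<lfloor>x'+t'\<rfloor>" "frac (x+t) = 0 \<longleftrightarrow> frac (x'+t') = 0"
    using shift1[OF h(3,4)] c[OF h(1)] ft by auto
  have "x + t \<le> real K \<longleftrightarrow> x' + t' \<le> real K" unfolding le_K_iff using e by simp
  thus ?thesis unfolding sim_K_alt using e by auto
qed

lemma ord_shift:
  fixes x1 x2 x1' x2' t t' :: real
  assumes o: "frac x1 \<le> frac x2 \<longleftrightarrow> frac x1' \<le> frac x2'"
    and c1: "frac x1 + frac t < 1 \<longleftrightarrow> frac x1' + frac t' < 1"
    and c2: "frac x2 + frac t < 1 \<longleftrightarrow> frac x2' + frac t' < 1"
  shows "frac (x1+t) \<le> frac (x2+t) \<longleftrightarrow> frac (x1'+t') \<le> frac (x2'+t')"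
proof -
  have a: "frac x1 \<ge> 0" "frac t \<ge> 0" "frac x1' \<ge> 0" "frac t' \<ge> 0" "frac x2 \<ge> 0" "frac x2' \<ge> 0"
    "frac x1 < 1" "frac t < 1" "frac x1' < 1" "frac t' < 1" "frac x2 < 1" "frac x2' < 1"
    by (simp_all add: frac_lt_1)
  show ?thesis unfolding frac_add using o c1 c2 a by (auto simp del: frac_eq_0_iff frac_ge_0)
qed

lemma fract_K_frac: "fract_K K v = (if v \<le> real K then frac v else 0)"
  by (simp add: fract_K_def frac_def)

lemma reg_shift:
  assumes fin: "finite C" and r: "reg_eq C K \<nu> \<nu>'" and t: "t \<ge> 0"
  shows "\<exists>t'\<ge>0. reg_eq C K (vplus \<nu> t) (vplus \<nu>' t')"
proof -
  have simC: "\<And>\<omega>. \<omega> \<in> C \<Longrightarrow> sim_K K (\<nu> \<omega>) (\<nu>' \<omega>)" using r unfolding reg_eq_def by auto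
  have ordC: "\<And>\<omega> \<omega>'. \<omega> \<in> C \<Longrightarrow> \<omega>' \<in> C \<Longrightarrow>
     fract_K K (\<nu> \<omega>) \<le> fract_K K (\<nu> \<omega>') \<longleftrightarrow> fract_K K (\<nu>' \<omega>) \<le> fract_K K (\<nu>' \<omega>')"
    using r unfolding reg_eq_def by auto
  define P where "P = insert (0,0) ((\<lambda>\<omega>. (fract_K K (\<nu> \<omega>), fract_K K (\<nu>' \<omega>))) ` C)"
  have finP: "finite P" unfolding P_def using fin by simp
  have zP: "((0::real),(0::real)) \<in> P" unfolding P_def by simp
  have fr: "0 \<le> fract_K K v \<and> fract_K K v < 1" for v
    unfolding fract_K_frac by (simp add: frac_lt_1)
  have rngP: "\<And>a a'. (a,a') \<in> P \<Longrightarrow> 0 \<le> a \<and> a < 1 \<and> 0 \<le> a' \<and> a' < 1"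
    unfolding P_def using fr by auto
  have ordP: "(a \<le> b \<longleftrightarrow> a' \<le> b')" if "(a,a') \<in> P" "(b,b') \<in> P" for a a' b b'
    using that unfolding P_def
    using ordC fract_K_zero[OF simC] fr by (smt (verit, best) imageE insertE prod.inject)
  define g where "g = 1 - frac t"
  have g: "0 < g" "g \<le> 1" unfolding g_def using frac_lt_1[of t] by auto
  obtain g' where g': "0 < g'" "g' \<le> 1" "g = 1 \<longleftrightarrow> g' = 1"
    "\<And>a a'. (a,a') \<in> P \<Longrightarrow> (a < g \<longleftrightarrow> a' < g') \<and> (a = g \<longleftrightarrow> a' = g')"
    using pick_point[OF finP zP rngP ordP g] by blast
  define t' where "t' = real_of_int \<lfloor>t\<rfloor> + (1 - g')"
  have fl: "\<lfloor>t'\<rfloor> = \<lfloor>t\<rfloor>" unfolding t'_def using g' by (simp add: floor_eq_iff)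
  have ft': "frac t' = 1 - g'" unfolding t'_def using g' by (simp add: frac_eq)
  have t'0: "t' \<ge> 0" unfolding t'_def using t g' by simp
  have ftz: "frac t = 0 \<longleftrightarrow> frac t' = 0" using ft' g'(3) g_def by (auto simp del: frac_eq_0_iff)
  have cw: "(frac (\<nu> \<omega>) + frac t < 1 \<longleftrightarrow> frac (\<nu>' \<omega>) + frac t' < 1) \<and>
      (frac (\<nu> \<omega>) + frac t = 1 \<longleftrightarrow> frac (\<nu>' \<omega>) + frac t' = 1)"
    if "\<omega> \<in> C" "\<nu> \<omega> \<le> real K" for \<omega>
  proof -
    have "\<nu>' \<omega> \<le> real K" using simC[OF that(1)] that(2) unfolding sim_K_def by auto
    hence "(frac (\<nu> \<omega>), frac (\<nu>' \<omega>)) \<in> P" unfolding P_def using that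
      by (auto simp: fract_K_frac intro!: image_eqI[of _ _ \<omega>])
    from g'(4)[OF this] show ?thesis unfolding ft' g_def by auto
  qed
  have simS: "sim_K K (\<nu> \<omega> + t) (\<nu>' \<omega> + t')" if "\<omega> \<in> C" for \<omega>
    using sim_shift[OF simC[OF that] t t'0 cw[OF that] ftz fl[symmetric]] by blast
  have ordS: "fract_K K (\<nu> \<omega>1 + t) \<le> fract_K K (\<nu> \<omega>2 + t) \<longleftrightarrow>
      fract_K K (\<nu>' \<omega>1 + t') \<le> fract_K K (\<nu>' \<omega>2 + t')" if "\<omega>1 \<in> C" "\<omega>2 \<in> C" for \<omega>1 \<omega>2
  proof (cases "\<nu> \<omega>1 + t > real K")
    case True
    hence "\<nu>' \<omega>1 + t' > real K" using simS[OF that(1)] unfolding sim_K_def by auto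
    then show ?thesis using True fr by (simp add: fract_K_def)
  next
    case F1: False
    show ?thesis
    proof (cases "\<nu> \<omega>2 + t > real K")
      case True
      hence "\<nu>' \<omega>2 + t' > real K" using simS[OF that(2)] unfolding sim_K_def by auto
      then show ?thesis using True fract_K_zero[OF simS[OF that(1)]] by (simp add: fract_K_def)
    next
      case F2: False
      have y': "\<nu>' \<omega>1 + t' \<le> real K" "\<nu>' \<omega>2 + t' \<le> real K"
        using simS[OF that(1)] simS[OF that(2)] F1 F2 unfolding sim_K_def by auto
      have x: "\<nu> \<omega>1 \<le> real K" "\<nu> \<omega>2 \<le> real K" "\<nu>' \<omega>1 \<le> real K" "\<nu>' \<omega>2 \<le> real K"
        using F1 F2 y' t t'0 by auto
      have o: "frac (\<nu> \<omega>1) \<le> frac (\<nu> \<omega>2) \<longleftrightarrow> frac (\<nu>' \<omega>1) \<le> frac (\<nu>' \<omega>2)"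
        using ordC[OF that] x by (simp add: fract_K_frac)
      have "frac (\<nu> \<omega>1 + t) \<le> frac (\<nu> \<omega>2 + t) \<longleftrightarrow> frac (\<nu>' \<omega>1 + t') \<le> frac (\<nu>' \<omega>2 + t')"
        using ord_shift[OF o] cw[OF that(1) x(1)] cw[OF that(2) x(2)] by blast
      then show ?thesis using F1 F2 y' by (simp add: fract_K_frac)
    qed
  qed
  show ?thesis using simS ordS t'0 unfolding reg_eq_def vplus_def by blast
qed




definition agree :: "('f, 'g, 'a, 'o, 'v) bat \<Rightarrow> nat \<Rightarrow> ('f, 'g, 'o) state \<Rightarrow> ('f, 'g, 'o) state \<Rightarrow> bool" where
  "agree D K st1 st2 = ((\<forall>F\<in>rfl D. \<forall>xs\<in>args D (rar D F). fst st1 F xs = fst st2 F xs) \<and>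
     (\<forall>\<omega>\<in>clocks D. sim_K K (snd st1 \<omega>) (snd st2 \<omega>)))"

lemma teval_in: "wf_t D t \<Longrightarrow> (\<forall>x\<in>fv_t t. env x \<in> objs D) \<Longrightarrow> teval env t \<in> objs D"
  by (cases t) auto

lemma map_teval_args: "\<forall>t\<in>set ts. wf_t D t \<Longrightarrow> (\<forall>x\<in>(\<Union>t\<in>set ts. fv_t t). env x \<in> objs D) \<Longrightarrow>
   map (teval env) ts \<in> args D (length ts)"
  unfolding args_def using teval_in by fastforce

lemma holds_agree:
  assumes "agree D K st1 st2"
  shows "wf_fm D \<phi> \<Longrightarrow> \<forall>n\<in>nums_fm \<phi>. n \<le> K \<Longrightarrow> (\<forall>x\<in>fv_fm \<phi>. env x \<in> objs D) \<Longrightarrow>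
    holds (objs D) st1 env \<phi> = holds (objs D) st2 env \<phi>"
proof (induction \<phi> arbitrary: env)
  case (Rel F ts)
  have "map (teval env) ts \<in> args D (rar D F)" using Rel map_teval_args[of ts D env] by auto
  then show ?case using assms Rel unfolding agree_def by auto
next
  case (Clk g ts c v)
  have "map (teval env) ts \<in> args D (far D g)" using Clk map_teval_args[of ts D env] by auto
  hence "(g, map (teval env) ts) \<in> clocks D" using Clk unfolding clocks_def by auto
  hence "sim_K K (snd st1 (g, map (teval env) ts)) (snd st2 (g, map (teval env) ts))"
    using assms unfolding agree_def by auto
  then show ?case using Clk cmp_sim by auto
next
  case (Ex x \<phi>)
  have "\<And>o'. o' \<in> objs D \<Longrightarrow> holds (objs D) st1 (env(x := o')) \<phi> = holds (objs D) st2 (env(x := o')) \<phi>"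
    using Ex by (intro Ex.IH) auto
  then show ?case by simp
qed auto

lemma sit_eq_agree: "sit_eq D K \<sigma>1 \<sigma>2 \<Longrightarrow> agree D K (st D \<sigma>1) (st D \<sigma>2)"
  unfolding sit_eq_def agree_def reg_eq_def val_def by auto

lemma models_agree: "sit_eq D K \<sigma>1 \<sigma>2 \<Longrightarrow> closed_wf D \<phi> \<Longrightarrow> \<forall>n\<in>nums_fm \<phi>. n \<le> K \<Longrightarrow>
   models D \<phi> \<sigma>1 = models D \<phi> \<sigma>2"
  unfolding models_def closed_wf_def using holds_agree[OF sit_eq_agree] by blast

lemma sit_eq_refl: "sit_eq D K \<sigma> \<sigma>" by (simp add: sit_eq_def reg_eq_refl)
lemma sit_eq_sym: "sit_eq D K \<sigma>1 \<sigma>2 \<Longrightarrow> sit_eq D K \<sigma>2 \<sigma>1" by (simp add: sit_eq_def reg_eq_sym)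
lemma sit_eq_trans: "sit_eq D K \<sigma>1 \<sigma>2 \<Longrightarrow> sit_eq D K \<sigma>2 \<sigma>3 \<Longrightarrow> sit_eq D K \<sigma>1 \<sigma>3"
  unfolding sit_eq_def by (auto intro: reg_eq_trans)

lemma cls_eq_iff: "cls D K \<sigma>1 = cls D K \<sigma>2 \<longleftrightarrow> sit_eq D K \<sigma>1 \<sigma>2"
proof
  assume "cls D K \<sigma>1 = cls D K \<sigma>2"
  hence "\<sigma>2 \<in> cls D K \<sigma>1" by (simp add: cls_def sit_eq_refl)
  thus "sit_eq D K \<sigma>1 \<sigma>2" by (simp add: cls_def)
next
  assume "sit_eq D K \<sigma>1 \<sigma>2"
  thus "cls D K \<sigma>1 = cls D K \<sigma>2" unfolding cls_def using sit_eq_trans sit_eq_sym by blast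
qed

lemma reg_eq_cong: "(\<And>\<omega>. \<omega> \<in> C \<Longrightarrow> \<nu> \<omega> = \<mu> \<omega>) \<Longrightarrow> (\<And>\<omega>. \<omega> \<in> C \<Longrightarrow> \<nu>' \<omega> = \<mu>' \<omega>) \<Longrightarrow>
   reg_eq C K \<nu> \<nu>' = reg_eq C K \<mu> \<mu>'"
  unfolding reg_eq_def by auto

lemma val_act: "val D (Act A os # \<sigma>) = (\<lambda>\<omega>. if holds (objs D) (st D \<sigma>) env0 (reset D A os (fst \<omega>) (snd \<omega>)) then 0 else val D \<sigma> \<omega>)"
  by (auto simp: val_def split_beta)

lemma val_wait: "val D (Wait t # \<sigma>) = vplus (val D \<sigma>) t"
  by (auto simp: val_def vplus_def)

lemma cb_poss: "clocked_bat D \<Longrightarrow> A \<in> atypes D \<Longrightarrow> os \<in> args D (aar D A) \<Longrightarrow> closed_wf D (poss D A os)"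
  unfolding clocked_bat_def by (elim conjE) (drule bspec, assumption, drule bspec, assumption, assumption)
lemma cb_ssa_none: "clocked_bat D \<Longrightarrow> F \<in> rfl D \<Longrightarrow> xs \<in> args D (rar D F) \<Longrightarrow> closed_wf D (ssa D None F xs)"
  unfolding clocked_bat_def by (elim conjE) (drule bspec, assumption, drule bspec, assumption, elim conjE, assumption)
lemma cb_ssa_some: "clocked_bat D \<Longrightarrow> F \<in> rfl D \<Longrightarrow> xs \<in> args D (rar D F) \<Longrightarrow> A \<in> atypes D \<Longrightarrow> os \<in> args D (aar D A) \<Longrightarrow> closed_wf D (ssa D (Some (A, os)) F xs)"
  unfolding clocked_bat_def apply (elim conjE)
  apply (drule bspec, assumption, drule bspec, assumption, elim conjE)
  apply (drule bspec, assumption, drule bspec, assumption, assumption) done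
lemma cb_reset_all: "clocked_bat D \<Longrightarrow> g \<in> ffl D \<Longrightarrow> xs \<in> args D (far D g) \<Longrightarrow> A \<in> atypes D \<Longrightarrow> os \<in> args D (aar D A) \<Longrightarrow> closed_wf D (reset D A os g xs) \<and> time_indep (reset D A os g xs)"
proof -
  assume "clocked_bat D"
  hence h: "\<forall>g\<in>ffl D. \<forall>xs\<in>args D (far D g). \<forall>A\<in>atypes D. \<forall>os\<in>args D (aar D A).
        closed_wf D (reset D A os g xs) \<and> time_indep (reset D A os g xs)" by (simp add: clocked_bat_def)
  assume "g \<in> ffl D" "xs \<in> args D (far D g)" "A \<in> atypes D" "os \<in> args D (aar D A)"
  thus ?thesis using h by blast
qed
lemma cb_reset: "clocked_bat D \<Longrightarrow> g \<in> ffl D \<Longrightarrow> xs \<in> args D (far D g) \<Longrightarrow> A \<in> atypes D \<Longrightarrow> os \<in> args D (aar D A) \<Longrightarrow> closed_wf D (reset D A os g xs)"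
  by (rule cb_reset_all[THEN conjunct1])

lemma bn_poss: "A \<in> atypes D \<Longrightarrow> os \<in> args D (aar D A) \<Longrightarrow> n \<in> nums_fm (poss D A os) \<Longrightarrow> n \<in> bat_nums D"
  unfolding bat_nums_def by (intro UnI1 UN_I)
lemma bn_ssa_none: "F \<in> rfl D \<Longrightarrow> xs \<in> args D (rar D F) \<Longrightarrow> n \<in> nums_fm (ssa D None F xs) \<Longrightarrow> n \<in> bat_nums D"
  unfolding bat_nums_def by (rule UnI1, rule UnI2, rule UN_I, assumption, rule UN_I, assumption, rule UnI1)
lemma bn_ssa_some: "F \<in> rfl D \<Longrightarrow> xs \<in> args D (rar D F) \<Longrightarrow> A \<in> atypes D \<Longrightarrow> os \<in> args D (aar D A) \<Longrightarrow>
   n \<in> nums_fm (ssa D (Some (A, os)) F xs) \<Longrightarrow> n \<in> bat_nums D"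
  unfolding bat_nums_def by (rule UnI1, rule UnI2, rule UN_I, assumption, rule UN_I, assumption, rule UnI2, rule UN_I, assumption, rule UN_I)
lemma bn_reset: "g \<in> ffl D \<Longrightarrow> xs \<in> args D (far D g) \<Longrightarrow> A \<in> atypes D \<Longrightarrow> os \<in> args D (aar D A) \<Longrightarrow>
   n \<in> nums_fm (reset D A os g xs) \<Longrightarrow> n \<in> bat_nums D"
  unfolding bat_nums_def by (rule UnI2, rule UN_I, assumption, rule UN_I, assumption, rule UN_I, assumption, rule UN_I)

lemma step_act_eq:
  assumes cb: "clocked_bat D" and nK: "\<forall>n\<in>bat_nums D. n \<le> K" and e: "sit_eq D K \<sigma>1 \<sigma>2"
    and A: "A \<in> atypes D" "os \<in> args D (aar D A)"
  shows "sit_eq D K (Act A os # \<sigma>1) (Act A os # \<sigma>2)"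
proof -
  have rel: "fst (st D (Act A os # \<sigma>1)) F xs = fst (st D (Act A os # \<sigma>2)) F xs"
    if "F \<in> rfl D" "xs \<in> args D (rar D F)" for F xs
  proof -
    have "closed_wf D (ssa D (Some (A, os)) F xs)" using cb_ssa_some[OF cb that A] .
    moreover have "\<forall>n\<in>nums_fm (ssa D (Some (A, os)) F xs). n \<le> K" using nK bn_ssa_some[OF that A] by blast
    ultimately show ?thesis using models_agree[OF e] by (simp add: models_def)
  qed
  define r where "r = (\<lambda>\<omega>. holds (objs D) (st D \<sigma>1) env0 (reset D A os (fst \<omega>) (snd \<omega>)))"
  have rr: "holds (objs D) (st D \<sigma>2) env0 (reset D A os (fst \<omega>) (snd \<omega>)) = r \<omega>" if w0: "\<omega> \<in> clocks D" for \<omega>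
  proof -
    obtain g xs where w1: "\<omega> = (g, xs)" by (cases \<omega>)
    with w0 have w: "\<omega> = (g, xs)" "g \<in> ffl D" "xs \<in> args D (far D g)" by (auto simp: clocks_def)
    have "closed_wf D (reset D A os g xs)" using cb_reset[OF cb w(2,3) A] .
    moreover have "\<forall>n\<in>nums_fm (reset D A os g xs). n \<le> K" using nK bn_reset[OF w(2,3) A] by blast
    ultimately show ?thesis using models_agree[OF e] w by (simp add: models_def r_def)
  qed
  have "reg_eq (clocks D) K (\<lambda>\<omega>. if r \<omega> then 0 else val D \<sigma>1 \<omega>) (\<lambda>\<omega>. if r \<omega> then 0 else val D \<sigma>2 \<omega>)"
    using e unfolding sit_eq_def by (intro reg_reset) auto
  hence "reg_eq (clocks D) K (val D (Act A os # \<sigma>1)) (val D (Act A os # \<sigma>2))"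
    by (subst reg_eq_cong[where \<mu>="\<lambda>\<omega>. if r \<omega> then 0 else val D \<sigma>1 \<omega>" and \<mu>'="\<lambda>\<omega>. if r \<omega> then 0 else val D \<sigma>2 \<omega>"])
       (auto simp: val_act rr r_def)
  thus ?thesis using rel unfolding sit_eq_def by blast
qed

lemma step_wait_eq:
  assumes cb: "clocked_bat D" and nK: "\<forall>n\<in>bat_nums D. n \<le> K" and e: "sit_eq D K \<sigma>1 \<sigma>2"
    and r: "reg_eq (clocks D) K (vplus (val D \<sigma>1) t) (vplus (val D \<sigma>2) t')"
  shows "sit_eq D K (Wait t # \<sigma>1) (Wait t' # \<sigma>2)"
proof -
  have rel: "fst (st D (Wait t # \<sigma>1)) F xs = fst (st D (Wait t' # \<sigma>2)) F xs"
    if "F \<in> rfl D" "xs \<in> args D (rar D F)" for F xs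
  proof -
    have "closed_wf D (ssa D None F xs)" using cb_ssa_none[OF cb that] .
    moreover have "\<forall>n\<in>nums_fm (ssa D None F xs). n \<le> K" using nK bn_ssa_none[OF that] by blast
    ultimately show ?thesis using models_agree[OF e] by (simp add: models_def)
  qed
  thus ?thesis using r unfolding sit_eq_def val_wait by blast
qed




definition pinv :: "('f, 'g, 'a, 'o, 'v) bat \<Rightarrow> nat \<Rightarrow> ('f, 'g, 'a, 'o, 'v) prog \<Rightarrow> bool" where
  "pinv D K p = (wf_p D p \<and> fv_p p = {} \<and> (\<forall>n\<in>nums_p p. n \<le> K))"

lemma fv_subst_t[simp]: "fv_t (subst_t x v t) = fv_t t - {x}" by (cases t) auto
lemma wf_subst_t: "wf_t D t \<Longrightarrow> v \<in> objs D \<Longrightarrow> wf_t D (subst_t x v t)" by (cases t) auto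

lemma fv_subst_fm[simp]: "fv_fm (subst_fm x v \<phi>) = fv_fm \<phi> - {x}" by (induction \<phi>) auto
lemma nums_subst_fm[simp]: "nums_fm (subst_fm x v \<phi>) = nums_fm \<phi>" by (induction \<phi>) auto
lemma wf_subst_fm: "wf_fm D \<phi> \<Longrightarrow> v \<in> objs D \<Longrightarrow> wf_fm D (subst_fm x v \<phi>)"
  by (induction \<phi>) (auto simp: wf_subst_t)

lemma fv_subst_p[simp]: "fv_p (subst_p x v p) = fv_p p - {x}" by (induction p) auto
lemma nums_subst_p[simp]: "nums_p (subst_p x v p) = nums_p p" by (induction p) auto
lemma wf_subst_p: "wf_p D p \<Longrightarrow> v \<in> objs D \<Longrightarrow> wf_p D (subst_p x v p)"
  by (induction p) (auto simp: wf_subst_t wf_subst_fm)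

lemma pinv_subst: "pinv D K (Pi x p) \<Longrightarrow> v \<in> objs D \<Longrightarrow> pinv D K (subst_p x v p)"
  unfolding pinv_def by (auto simp: wf_subst_p)

lemma pinv_Nil[simp]: "pinv D K Nil_prog" by (simp add: pinv_def Nil_prog_def)

lemma trans_snoc: "trans D p s a p' s' \<Longrightarrow> s' = a # s"
  by (induction D p s a p' s' rule: trans.induct) auto

lemma trans_wait: "trans D p s a p' s' \<Longrightarrow> a = Wait t \<Longrightarrow> t \<ge> 0"
  by (induction D p s a p' s' rule: trans.induct) auto

lemma trans_act: "trans D p s a p' s' \<Longrightarrow> a = Act A os \<Longrightarrow> wf_p D p \<Longrightarrow> A \<in> atypes D \<and> os \<in> args D (aar D A)"
proof (induction D p s a p' s' rule: trans.induct)
  case (1 D A' ts s a p' s')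
  then obtain os' where "ts = map Obj os'" "a = Act A' os'" by auto
  then show ?case using 1 by (auto simp: args_def)
next
  case (6 D x p s a p' s')
  then show ?case by (auto simp: wf_subst_p)
qed auto

lemma trans_pinv: "trans D p s a p' s' \<Longrightarrow> pinv D K p \<Longrightarrow> pinv D K p'"
proof (induction D p s a p' s' rule: trans.induct)
  case (6 D x p s a p' s')
  then show ?case using pinv_subst by fastforce
qed (auto simp: pinv_def Nil_prog_def)

lemma final_agree: "pinv D K p \<Longrightarrow> sit_eq D K \<sigma>1 \<sigma>2 \<Longrightarrow> final D p \<sigma>1 = final D p \<sigma>2"
proof (induction D p \<sigma>1 rule: final.induct)
  case (3 D \<phi> s)
  then show ?case using models_agree[OF 3(2)] by (simp add: pinv_def closed_wf_def)
next
  case (6 D x p s)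
  then show ?case using pinv_subst by fastforce
qed (auto simp: pinv_def)

definition compat :: "('a, 'o) action \<Rightarrow> ('a, 'o) action \<Rightarrow> bool" where
  "compat a b = ((\<exists>A os. a = Act A os \<and> b = a) \<or> (\<exists>t t'. a = Wait t \<and> b = Wait t' \<and> t' \<ge> 0))"

lemma trans_transfer:
  shows "trans D p \<sigma>1 a p' s1 \<Longrightarrow> clocked_bat D \<Longrightarrow> \<forall>n\<in>bat_nums D. n \<le> K \<Longrightarrow> pinv D K p \<Longrightarrow> sit_eq D K \<sigma>1 \<sigma>2 \<Longrightarrow> compat a b \<Longrightarrow>
    trans D p \<sigma>2 b p' (b # \<sigma>2)"
proof (induction D p \<sigma>1 a p' s1 rule: trans.induct)
  case (1 D' A ts s a p' s')
  then obtain os where os: "ts = map Obj os" "a = Act A os" "models D' (poss D' A os) s" "p' = Nil_prog" by auto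
  have b: "b = a" using 1(6) os unfolding compat_def by auto
  have A: "A \<in> atypes D'" "os \<in> args D' (aar D' A)" using 1(4) os by (auto simp: pinv_def args_def)
  have "models D' (poss D' A os) \<sigma>2"
    using os(3) models_agree[OF 1(5) cb_poss[OF 1(2) A]] bn_poss[OF A] 1(3) by auto
  then show ?case using os b by auto
next
  case (2 D' s a p' s')
  then show ?case unfolding compat_def by auto
next
  case (4 D' p q s a p' s')
  then show ?case using final_agree[of D' K p s \<sigma>2] by (auto simp: pinv_def)
next
  case (5 D' p q s a p' s')
  then show ?case by (auto simp: pinv_def)
next
  case (6 D' x p s a p' s')
  then show ?case using pinv_subst by fastforce
next
  case (7 D' p s a p' s')
  then show ?case by (auto simp: pinv_def)
next
  case (8 D' p q s a p' s')
  then show ?case by (auto simp: pinv_def)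
qed auto

lemma bisim:
  assumes cb: "clocked_bat D" and nK: "\<forall>n\<in>bat_nums D. n \<le> K" and pi: "pinv D K p"
    and e: "sit_eq D K \<sigma>1 \<sigma>2" and tr: "trans D p \<sigma>1 a p' \<sigma>1'"
    and W: "\<forall>t\<ge>0. \<exists>t'\<in>W. t' \<ge> 0 \<and> reg_eq (clocks D) K (vplus (val D \<sigma>1) t) (vplus (val D \<sigma>2) t')"
  shows "\<exists>b. trans D p \<sigma>2 b p' (b # \<sigma>2) \<and> sit_eq D K \<sigma>1' (b # \<sigma>2) \<and>
           ((\<exists>A os. a = Act A os \<and> b = a) \<or> (\<exists>t'\<in>W. b = Wait t'))"
proof (cases a)
  case (Act A os)
  have A: "A \<in> atypes D \<and> os \<in> args D (aar D A)" using trans_act[OF tr Act] pi by (auto simp: pinv_def)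
  have "trans D p \<sigma>2 a p' (a # \<sigma>2)"
    using trans_transfer[OF tr cb nK pi e] Act by (auto simp: compat_def)
  moreover have "sit_eq D K \<sigma>1' (a # \<sigma>2)"
    using trans_snoc[OF tr] step_act_eq[OF cb nK e] A Act by auto
  ultimately show ?thesis using Act by blast
next
  case (Wait t)
  have t: "t \<ge> 0" using trans_wait[OF tr Wait] .
  then obtain t' where t': "t' \<in> W" "t' \<ge> 0" "reg_eq (clocks D) K (vplus (val D \<sigma>1) t) (vplus (val D \<sigma>2) t')"
    using W by blast
  have "trans D p \<sigma>2 (Wait t') p' (Wait t' # \<sigma>2)"
    using trans_transfer[OF tr cb nK pi e] Wait t' by (auto simp: compat_def)
  moreover have "sit_eq D K \<sigma>1' (Wait t' # \<sigma>2)"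
    using trans_snoc[OF tr] step_wait_eq[OF cb nK e t'(3)] Wait by auto
  ultimately show ?thesis using t' by blast
qed

lemma finite_clocks: "clocked_bat D \<Longrightarrow> finite (clocks D)"
proof -
  assume cb: "clocked_bat D"
  have "clocks D = Sigma (ffl D) (\<lambda>g. args D (far D g))" unfolding clocks_def by auto
  moreover have "finite (args D n)" for n
    using cb finite_lists_length_eq[of "objs D" n] unfolding clocked_bat_def args_def by auto
  ultimately show ?thesis using cb unfolding clocked_bat_def by auto
qed

definition nn :: "('f, 'g, 'a, 'o, 'v) bat \<Rightarrow> ('a, 'o) sit \<Rightarrow> bool" where
  "nn D \<sigma> = (\<forall>\<omega>. val D \<sigma> \<omega> \<ge> 0)"

lemma nn_Nil: "nn D []" by (simp add: nn_def val_def)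

lemma trans_nn: "trans D p s a p' s' \<Longrightarrow> nn D s \<Longrightarrow> nn D s'"
proof -
  assume tr: "trans D p s a p' s'" and n: "nn D s"
  have s': "s' = a # s" using trans_snoc[OF tr] .
  show ?thesis
  proof (cases a)
    case (Act A os)
    then show ?thesis using n s' by (auto simp: nn_def val_act)
  next
    case (Wait t)
    then show ?thesis using n s' trans_wait[OF tr Wait] by (auto simp: nn_def val_wait vplus_def)
  qed
qed

lemma trans_star_snoc: "trans_star D p s as q s1 \<Longrightarrow> trans D q s1 a r s2 \<Longrightarrow> trans_star D p s (as @ [a]) r s2"
  by (induction rule: trans_star.induct) (auto intro: trans_star.intros)

lemma trans_star_pinv: "trans_star D p s as q s' \<Longrightarrow> pinv D K p \<Longrightarrow> pinv D K q"
  by (induction rule: trans_star.induct) (auto dest: trans_pinv)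




definition done_st where
  "done_st D K TS E V0 \<sigma> p = (nn D \<sigma> \<and>
     (\<forall>p' \<sigma>'. (p', \<sigma>') \<in> succs D K TS \<sigma> p \<longrightarrow>
        ((cls D K \<sigma>, p), (cls D K \<sigma>', p')) \<in> E \<and> (cls D K \<sigma>', p') \<in> V0))"

lemma done_mono: "done_st D K TS E V0 \<sigma> p \<Longrightarrow> E \<subseteq> E' \<Longrightarrow> V0 \<subseteq> V0' \<Longrightarrow> done_st D K TS E' V0' \<sigma> p"
  unfolding done_st_def by blast

definition ainv where
  "ainv D K TS q0 Opn V E cur = (
     (\<forall>\<sigma> p. (\<sigma>, p) \<in> Opn \<longrightarrow> (cls D K \<sigma>, p) \<in> insert q0 V \<and> nn D \<sigma>) \<and>
     (\<forall>x\<in>insert q0 V. (q0, x) \<in> E\<^sup>*) \<and>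
     (\<forall>\<sigma> p R. cur = Some (\<sigma>, p, R) \<longrightarrow> (cls D K \<sigma>, p) \<in> insert q0 V \<and> nn D \<sigma> \<and> R \<subseteq> succs D K TS \<sigma> p \<and>
        (\<forall>p' \<sigma>'. (p', \<sigma>') \<in> succs D K TS \<sigma> p - R \<longrightarrow>
           ((cls D K \<sigma>, p), (cls D K \<sigma>', p')) \<in> E \<and> (cls D K \<sigma>', p') \<in> insert q0 V)) \<and>
     (\<forall>c p. (c, p) \<in> insert q0 V \<longrightarrow> (\<exists>\<sigma>. c = cls D K \<sigma> \<and>
        ((\<sigma>, p) \<in> Opn \<or> (\<exists>R. cur = Some (\<sigma>, p, R)) \<or> done_st D K TS E (insert q0 V) \<sigma> p))) \<and>
     (\<forall>c1 p1 c2 p2. ((c1, p1), (c2, p2)) \<in> E \<longrightarrow>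
        (\<exists>\<sigma> a \<sigma>2. c1 = cls D K \<sigma> \<and> c2 = cls D K \<sigma>2 \<and> trans D p1 \<sigma> a p2 \<sigma>2)))"

lemma succs_nn: "(p', \<sigma>') \<in> succs D K TS \<sigma> p \<Longrightarrow> nn D \<sigma> \<Longrightarrow> nn D \<sigma>'"
  unfolding succs_def using trans_nn by blast

lemma ainv_step:
  assumes st: "alg_step D K TS (Opn, V, E, cur) (Opn', V', E', cur')"
    and I: "ainv D K TS q0 Opn V E cur"
  shows "ainv D K TS q0 Opn' V' E' cur'"
  using st
proof cases
  case (pick \<sigma> p)
  note I1 = I[unfolded ainv_def, THEN conjunct1]
  note I2 = I[unfolded ainv_def, THEN conjunct2, THEN conjunct1]
  note I4 = I[unfolded ainv_def, THEN conjunct2, THEN conjunct2, THEN conjunct2, THEN conjunct1]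
  note I5 = I[unfolded ainv_def, THEN conjunct2, THEN conjunct2, THEN conjunct2, THEN conjunct2]
  have C4: "\<exists>\<sigma>'. c = cls D K \<sigma>' \<and> ((\<sigma>', q) \<in> Opn - {(\<sigma>, p)} \<or> (\<exists>R. Some (\<sigma>, p, succs D K TS \<sigma> p) = Some (\<sigma>', q, R)) \<or>
      done_st D K TS E (insert q0 V) \<sigma>' q)" if cq0: "(c, q) \<in> insert q0 V" for c q
  proof -
    obtain \<sigma>' where "c = cls D K \<sigma>'" "(\<sigma>', q) \<in> Opn \<or> (\<exists>R. cur = Some (\<sigma>', q, R)) \<or> done_st D K TS E (insert q0 V) \<sigma>' q"
      using I4 cq0 by blast
    then show ?thesis using pick by auto
  qed
  show ?thesis unfolding ainv_def using pick I1 I2 I5 C4 by auto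
next
  case (process p' \<sigma>' R \<sigma> p)
  note I1 = I[unfolded ainv_def, THEN conjunct1]
  note I2 = I[unfolded ainv_def, THEN conjunct2, THEN conjunct1]
  note I3 = I[unfolded ainv_def, THEN conjunct2, THEN conjunct2, THEN conjunct1]
  note I4 = I[unfolded ainv_def, THEN conjunct2, THEN conjunct2, THEN conjunct2, THEN conjunct1]
  note I5 = I[unfolded ainv_def, THEN conjunct2, THEN conjunct2, THEN conjunct2, THEN conjunct2]
  have cur: "cur = Some (\<sigma>, p, R)" using process by simp
  have h: "(cls D K \<sigma>, p) \<in> insert q0 V" "nn D \<sigma>" "R \<subseteq> succs D K TS \<sigma> p"
    "\<And>p2 \<sigma>2. (p2, \<sigma>2) \<in> succs D K TS \<sigma> p - R \<Longrightarrow>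
           ((cls D K \<sigma>, p), (cls D K \<sigma>2, p2)) \<in> E \<and> (cls D K \<sigma>2, p2) \<in> insert q0 V"
    using I3 cur by blast+
  have inS: "(p', \<sigma>') \<in> succs D K TS \<sigma> p" using h(3) process by auto
  have nn': "nn D \<sigma>'" using succs_nn[OF inS h(2)] .
  obtain \<alpha> where tr: "trans D p \<sigma> \<alpha> p' \<sigma>'" using inS unfolding succs_def by auto
  define e where "e = ((cls D K \<sigma>, p), (cls D K \<sigma>', p'))"
  have V': "V' = V \<union> {(cls D K \<sigma>', p')}" and E': "E' = E \<union> {e}" and
    O': "Opn' = (if (cls D K \<sigma>', p') \<notin> V then Opn \<union> {(\<sigma>', p')} else Opn)" and
    cur': "cur' = Some (\<sigma>, p, R - {(p', \<sigma>')})" using process by (auto simp: e_def)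
  have V0sub: "insert q0 V \<subseteq> insert q0 V'" using V' by auto
  have Esub: "E \<subseteq> E'" using E' by auto
  have Erts: "E\<^sup>* \<subseteq> E'\<^sup>*" using Esub rtrancl_mono by blast
  have eE: "e \<in> E'" using E' by auto
  have newV: "(cls D K \<sigma>', p') \<in> insert q0 V'" using V' by auto
  have J1: "\<forall>\<sigma>2 p2. (\<sigma>2, p2) \<in> Opn' \<longrightarrow> (cls D K \<sigma>2, p2) \<in> insert q0 V' \<and> nn D \<sigma>2"
    using I1 V0sub newV nn' O' by (auto split: if_splits)
  have reach_p: "(q0, (cls D K \<sigma>, p)) \<in> E'\<^sup>*" using I2 h(1) Erts by blast
  have J2: "\<forall>x\<in>insert q0 V'. (q0, x) \<in> E'\<^sup>*"
  proof
    fix x assume "x \<in> insert q0 V'"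
    hence "x \<in> insert q0 V \<or> x = (cls D K \<sigma>', p')" using V' by auto
    thus "(q0, x) \<in> E'\<^sup>*"
    proof
      assume "x \<in> insert q0 V" thus ?thesis using I2 Erts by blast
    next
      assume "x = (cls D K \<sigma>', p')"
      thus ?thesis using reach_p eE unfolding e_def by (meson rtrancl.rtrancl_into_rtrancl)
    qed
  qed
  have J3: "\<forall>\<sigma>2 p2 R2. cur' = Some (\<sigma>2, p2, R2) \<longrightarrow> (cls D K \<sigma>2, p2) \<in> insert q0 V' \<and> nn D \<sigma>2 \<and>
        R2 \<subseteq> succs D K TS \<sigma>2 p2 \<and>
        (\<forall>p3 \<sigma>3. (p3, \<sigma>3) \<in> succs D K TS \<sigma>2 p2 - R2 \<longrightarrow>
           ((cls D K \<sigma>2, p2), (cls D K \<sigma>3, p3)) \<in> E' \<and> (cls D K \<sigma>3, p3) \<in> insert q0 V')"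
  proof (intro allI impI)
    fix \<sigma>2 p2 R2 assume "cur' = Some (\<sigma>2, p2, R2)"
    hence eq: "\<sigma>2 = \<sigma>" "p2 = p" "R2 = R - {(p', \<sigma>')}" using cur' by auto
    have "((cls D K \<sigma>, p), (cls D K \<sigma>3, p3)) \<in> E' \<and> (cls D K \<sigma>3, p3) \<in> insert q0 V'"
      if "(p3, \<sigma>3) \<in> succs D K TS \<sigma> p - (R - {(p', \<sigma>')})" for p3 \<sigma>3
    proof (cases "(p3, \<sigma>3) = (p', \<sigma>')")
      case True thus ?thesis using eE newV unfolding e_def by auto
    next
      case False thus ?thesis using that h(4)[of p3 \<sigma>3] Esub V0sub by auto
    qed
    thus "(cls D K \<sigma>2, p2) \<in> insert q0 V' \<and> nn D \<sigma>2 \<and> R2 \<subseteq> succs D K TS \<sigma>2 p2 \<and>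
        (\<forall>p3 \<sigma>3. (p3, \<sigma>3) \<in> succs D K TS \<sigma>2 p2 - R2 \<longrightarrow>
           ((cls D K \<sigma>2, p2), (cls D K \<sigma>3, p3)) \<in> E' \<and> (cls D K \<sigma>3, p3) \<in> insert q0 V')"
      using eq h V0sub by auto
  qed
  have J4: "\<forall>c q. (c, q) \<in> insert q0 V' \<longrightarrow> (\<exists>\<sigma>2. c = cls D K \<sigma>2 \<and>
        ((\<sigma>2, q) \<in> Opn' \<or> (\<exists>R2. cur' = Some (\<sigma>2, q, R2)) \<or> done_st D K TS E' (insert q0 V') \<sigma>2 q))"
  proof (intro allI impI)
    fix c q assume cq: "(c, q) \<in> insert q0 V'"
    show "\<exists>\<sigma>2. c = cls D K \<sigma>2 \<and>
        ((\<sigma>2, q) \<in> Opn' \<or> (\<exists>R2. cur' = Some (\<sigma>2, q, R2)) \<or> done_st D K TS E' (insert q0 V') \<sigma>2 q)"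
    proof (cases "(c, q) \<in> insert q0 V")
      case True
      then obtain \<sigma>2 where w: "c = cls D K \<sigma>2"
        "(\<sigma>2, q) \<in> Opn \<or> (\<exists>R. cur = Some (\<sigma>2, q, R)) \<or> done_st D K TS E (insert q0 V) \<sigma>2 q"
        using I4 by blast
      have "(\<sigma>2, q) \<in> Opn' \<or> (\<exists>R2. cur' = Some (\<sigma>2, q, R2)) \<or> done_st D K TS E' (insert q0 V') \<sigma>2 q"
        using w(2) O' cur cur' done_mono[OF _ Esub V0sub] by (auto split: if_splits)
      then show ?thesis using w(1) by blast
    next
      case False
      hence "(c, q) = (cls D K \<sigma>', p')" "(cls D K \<sigma>', p') \<notin> V" using cq V' by auto
      then show ?thesis using O' by auto
    qed
  qed
  have J5: "\<forall>c1 p1 c2 p2. ((c1, p1), (c2, p2)) \<in> E' \<longrightarrow>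
        (\<exists>\<sigma> a \<sigma>2. c1 = cls D K \<sigma> \<and> c2 = cls D K \<sigma>2 \<and> trans D p1 \<sigma> a p2 \<sigma>2)"
    using I5 E' tr unfolding e_def by blast
  show ?thesis unfolding ainv_def using J1 J2 J3 J4 J5 by blast
next
  case (finish \<sigma> p)
  note I1 = I[unfolded ainv_def, THEN conjunct1]
  note I2 = I[unfolded ainv_def, THEN conjunct2, THEN conjunct1]
  note I3 = I[unfolded ainv_def, THEN conjunct2, THEN conjunct2, THEN conjunct1]
  note I4 = I[unfolded ainv_def, THEN conjunct2, THEN conjunct2, THEN conjunct2, THEN conjunct1]
  note I5 = I[unfolded ainv_def, THEN conjunct2, THEN conjunct2, THEN conjunct2, THEN conjunct2]
  have cur: "cur = Some (\<sigma>, p, {})" using finish by simp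
  have dn: "done_st D K TS E (insert q0 V) \<sigma> p"
    using I3 cur unfolding done_st_def by auto
  have C4: "\<exists>\<sigma>'. c = cls D K \<sigma>' \<and> ((\<sigma>', q) \<in> Opn \<or> done_st D K TS E (insert q0 V) \<sigma>' q)"
    if cq0: "(c, q) \<in> insert q0 V" for c q
  proof -
    obtain \<sigma>' where "c = cls D K \<sigma>'" "(\<sigma>', q) \<in> Opn \<or> (\<exists>R. cur = Some (\<sigma>', q, R)) \<or> done_st D K TS E (insert q0 V) \<sigma>' q"
      using I4 cq0 by blast
    then show ?thesis using cur dn by auto
  qed
  show ?thesis unfolding ainv_def using finish I1 I2 I5 C4 by auto
qed

lemma ainv_run:
  assumes "(alg_step D K TS)\<^sup>*\<^sup>* c c'"
    and "ainv D K TS q0 (fst c) (fst (snd c)) (fst (snd (snd c))) (snd (snd (snd c)))"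
  shows "ainv D K TS q0 (fst c') (fst (snd c')) (fst (snd (snd c'))) (snd (snd (snd c')))"
  using assms
proof (induction rule: rtranclp_induct)
  case base
  then show ?case .
next
  case (step y z)
  obtain a b c d where y: "y = (a, b, c, d)" by (cases y) auto
  obtain a' b' c' d' where z: "z = (a', b', c', d')" by (cases z) auto
  show ?case using ainv_step[of D K TS a b c d a' b' c' d' q0] step y z by simp
qed

theorem lemma8:
  fixes D :: "('f, 'g, 'a, 'o, 'v) bat"
    and \<delta> :: "('f, 'g, 'a, 'o, 'v) prog"
    and K :: nat
    and TS :: "('g \<times> 'o list \<Rightarrow> real) \<Rightarrow> nat \<Rightarrow> real set"
  assumes "clocked_bat D"
    and "program D \<delta>"
    and "\<forall>n \<in> bat_nums D \<union> nums_p \<delta>. n \<le> K"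
    and "tsuccs_spec D TS"
    and "alg2_returns D K TS \<delta> V q0 E"
  shows "(\<exists>\<sigma>' \<delta>'. (cls D K \<sigma>', \<delta>') \<in> insert q0 V \<and> (q0, (cls D K \<sigma>', \<delta>')) \<in> E\<^sup>* \<and> final D \<delta>' \<sigma>')
         \<longleftrightarrow> (\<exists>\<alpha>s. realization D \<delta> \<alpha>s)"
proof -
  note cb = assms(1)
  have nK: "\<forall>n\<in>bat_nums D. n \<le> K" using assms(3) by auto
  have pd: "pinv D K \<delta>" using assms(2,3) by (auto simp: pinv_def program_def)
  have q0: "q0 = (cls D K [], \<delta>)" and run: "(alg_step D K TS)\<^sup>*\<^sup>* ({([], \<delta>)}, {}, {}, None) ({}, V, E, None)"
    using assms(5) unfolding alg2_returns_def by auto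
  have I0: "ainv D K TS q0 {([], \<delta>)} {} {} None"
    unfolding ainv_def q0 by (auto simp: nn_Nil)
  have I: "ainv D K TS q0 {} V E None"
    using ainv_run[OF run, of q0] I0 by simp
  note C2 = I[unfolded ainv_def, THEN conjunct2, THEN conjunct1]
  note C4 = I[unfolded ainv_def, THEN conjunct2, THEN conjunct2, THEN conjunct2, THEN conjunct1]
  note C5 = I[unfolded ainv_def, THEN conjunct2, THEN conjunct2, THEN conjunct2, THEN conjunct2]
  have finC: "finite (clocks D)" using finite_clocks[OF cb] .
  show ?thesis
  proof
    assume "\<exists>\<sigma>' \<delta>'. (cls D K \<sigma>', \<delta>') \<in> insert q0 V \<and> (q0, (cls D K \<sigma>', \<delta>')) \<in> E\<^sup>* \<and> final D \<delta>' \<sigma>'"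
    then obtain \<sigma>' \<delta>' where path: "(q0, (cls D K \<sigma>', \<delta>')) \<in> E\<^sup>*" and fin: "final D \<delta>' \<sigma>'" by blast
    have sp: "\<exists>\<sigma>c as. trans_star D \<delta> [] as (snd x) \<sigma>c \<and> fst x = cls D K \<sigma>c" if "(q0, x) \<in> E\<^sup>*" for x
      using that
    proof (induction rule: rtrancl_induct)
      case base
      then show ?case using q0 by (auto intro: trans_star.refl)
    next
      case (step y z)
      obtain c1 p1 where y: "y = (c1, p1)" by (cases y) auto
      obtain c2 p2 where z: "z = (c2, p2)" by (cases z) auto
      obtain \<sigma>c as where ih: "trans_star D \<delta> [] as p1 \<sigma>c" "c1 = cls D K \<sigma>c" using step.IH y by auto
      obtain \<sigma> a \<sigma>2 where ed: "c1 = cls D K \<sigma>" "c2 = cls D K \<sigma>2" "trans D p1 \<sigma> a p2 \<sigma>2"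
        using C5 step.hyps(2) y z by blast
      have e: "sit_eq D K \<sigma> \<sigma>c" using ed(1) ih(2) cls_eq_iff by metis
      have pp: "pinv D K p1" using trans_star_pinv[OF ih(1) pd] .
      have W: "\<forall>t\<ge>0. \<exists>t'\<in>UNIV. t' \<ge> 0 \<and> reg_eq (clocks D) K (vplus (val D \<sigma>) t) (vplus (val D \<sigma>c) t')"
        using reg_shift[OF finC] e unfolding sit_eq_def by blast
      obtain b where b: "trans D p1 \<sigma>c b p2 (b # \<sigma>c)" "sit_eq D K \<sigma>2 (b # \<sigma>c)"
        using bisim[OF cb nK pp e ed(3) W] by blast
      have "trans_star D \<delta> [] (as @ [b]) p2 (b # \<sigma>c)" using trans_star_snoc[OF ih(1) b(1)] .
      moreover have "c2 = cls D K (b # \<sigma>c)" using ed(2) b(2) cls_eq_iff by metis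
      ultimately show ?case using z by auto
    qed
    obtain \<sigma>c as where r: "trans_star D \<delta> [] as \<delta>' \<sigma>c" "cls D K \<sigma>' = cls D K \<sigma>c"
      using sp[OF path] by auto
    have "final D \<delta>' \<sigma>c"
      using fin final_agree[OF trans_star_pinv[OF r(1) pd]] r(2) cls_eq_iff by metis
    thus "\<exists>\<alpha>s. realization D \<delta> \<alpha>s" using r(1) unfolding realization_def by blast
  next
    assume "\<exists>\<alpha>s. realization D \<delta> \<alpha>s"
    then obtain as p' \<sigma>' where r: "trans_star D \<delta> [] as p' \<sigma>'" "final D p' \<sigma>'"
      unfolding realization_def by blast
    define J where "J = (\<lambda>q \<sigma>c. \<exists>\<sigma>. done_st D K TS E (insert q0 V) \<sigma> q \<and> sit_eq D K \<sigma> \<sigma>c \<and>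
        (cls D K \<sigma>, q) \<in> insert q0 V \<and> pinv D K q)"
    have onestep: "J q \<sigma>c1" if j: "J p \<sigma>c" and tr: "trans D p \<sigma>c a q \<sigma>c1" for p \<sigma>c a q \<sigma>c1
    proof -
      obtain \<sigma> where s: "done_st D K TS E (insert q0 V) \<sigma> p" "sit_eq D K \<sigma> \<sigma>c" "pinv D K p"
        using j unfolding J_def by blast
      have e: "sit_eq D K \<sigma>c \<sigma>" using sit_eq_sym[OF s(2)] .
      have nnv: "\<forall>\<omega>\<in>clocks D. val D \<sigma> \<omega> \<ge> 0" using s(1) unfolding done_st_def nn_def by auto
      have W: "\<forall>t\<ge>0. \<exists>t'\<in>TS (val D \<sigma>) K. t' \<ge> 0 \<and> reg_eq (clocks D) K (vplus (val D \<sigma>c) t) (vplus (val D \<sigma>) t')"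
      proof (intro allI impI)
        fix t :: real assume t: "t \<ge> 0"
        obtain t1 where t1: "t1 \<ge> 0" "reg_eq (clocks D) K (vplus (val D \<sigma>c) t) (vplus (val D \<sigma>) t1)"
          using reg_shift[OF finC _ t, where \<nu>="val D \<sigma>c" and \<nu>'="val D \<sigma>"] e unfolding sit_eq_def by blast
        obtain t2 where t2: "t2 \<in> TS (val D \<sigma>) K" "t2 \<ge> 0" "reg_eq (clocks D) K (vplus (val D \<sigma>) t1) (vplus (val D \<sigma>) t2)"
          using assms(4) nnv t1(1) unfolding tsuccs_spec_def by blast
        show "\<exists>t'\<in>TS (val D \<sigma>) K. t' \<ge> 0 \<and> reg_eq (clocks D) K (vplus (val D \<sigma>c) t) (vplus (val D \<sigma>) t')"
          using t2 reg_eq_trans[OF t1(2) t2(3)] by blast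
      qed
      obtain b where b: "trans D p \<sigma> b q (b # \<sigma>)" "sit_eq D K \<sigma>c1 (b # \<sigma>)"
        "(\<exists>A os. a = Act A os \<and> b = a) \<or> (\<exists>t'\<in>TS (val D \<sigma>) K. b = Wait t')"
        using bisim[OF cb nK s(3) e tr W] by blast
      have "b \<in> acts D K TS \<sigma>"
      proof -
        { assume "\<exists>A os. a = Act A os \<and> b = a"
          then obtain A os where "b = Act A os" by blast
          moreover have "A \<in> atypes D \<and> os \<in> args D (aar D A)"
            using trans_act[OF b(1) calculation] s(3) by (auto simp: pinv_def)
          ultimately have ?thesis unfolding acts_def by auto }
        thus ?thesis using b(3) unfolding acts_def by auto
      qed
      hence "(q, b # \<sigma>) \<in> succs D K TS \<sigma> p" using b(1) unfolding succs_def by blast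
      hence inV: "(cls D K (b # \<sigma>), q) \<in> insert q0 V" using s(1) unfolding done_st_def by blast
      then obtain \<sigma>3 where w: "cls D K (b # \<sigma>) = cls D K \<sigma>3"
        "(\<sigma>3, q) \<in> {} \<or> (\<exists>R. (None :: (('a, 'o) sit \<times> ('f, 'g, 'a, 'o, 'v) prog \<times> (('f, 'g, 'a, 'o, 'v) prog \<times> ('a, 'o) sit) set) option) = Some (\<sigma>3, q, R)) \<or> done_st D K TS E (insert q0 V) \<sigma>3 q"
        using C4 by blast
      have d3: "done_st D K TS E (insert q0 V) \<sigma>3 q" using w(2) by auto
      have e3: "sit_eq D K \<sigma>3 \<sigma>c1"
        using sit_eq_trans[OF sit_eq_sym[OF iffD1[OF cls_eq_iff w(1)]] sit_eq_sym[OF b(2)]] .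
      have "pinv D K q" using trans_pinv[OF tr s(3)] .
      then show ?thesis unfolding J_def using d3 e3 inV w(1) by metis
    qed
    have J0: "J \<delta> []"
    proof -
      obtain \<sigma> where w: "cls D K [] = cls D K \<sigma>"
        "(\<sigma>, \<delta>) \<in> {} \<or> (\<exists>R. (None :: (('a, 'o) sit \<times> ('f, 'g, 'a, 'o, 'v) prog \<times> (('f, 'g, 'a, 'o, 'v) prog \<times> ('a, 'o) sit) set) option) = Some (\<sigma>, \<delta>, R)) \<or> done_st D K TS E (insert q0 V) \<sigma> \<delta>"
        using C4 q0 by blast
      then show ?thesis unfolding J_def using pd q0 cls_eq_iff sit_eq_sym by (metis empty_iff insertI1 option.distinct(1))
    qed
    have Jall: "trans_star D p s as2 p2 s2 \<Longrightarrow> J p s \<Longrightarrow> J p2 s2" for p s as2 p2 s2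
      by (induction rule: trans_star.induct) (auto intro: onestep)
    obtain \<sigma> where s: "done_st D K TS E (insert q0 V) \<sigma> p'" "sit_eq D K \<sigma> \<sigma>'"
        "(cls D K \<sigma>, p') \<in> insert q0 V" "pinv D K p'"
      using Jall[OF r(1) J0] unfolding J_def by blast
    have "final D p' \<sigma>" using r(2) final_agree[OF s(4) s(2)] by simp
    moreover have "(q0, (cls D K \<sigma>, p')) \<in> E\<^sup>*" using C2 s(3) by blast
    ultimately show "\<exists>\<sigma>' \<delta>'. (cls D K \<sigma>', \<delta>') \<in> insert q0 V \<and> (q0, (cls D K \<sigma>', \<delta>')) \<in> E\<^sup>* \<and> final D \<delta>' \<sigma>'"
      using s(3) by blast
  qed
qed


end
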